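(* Let $k\geqslant 1$ be an integer. The following $\mathbb{Z}_p$-Lie lattices (each on a basis $x_0,x_1,x_2$ with $[x_1,x_2]=0$) are self-similar of index $p^k$: (1) $L_6(a)$ for any $a\in\mathbb{Z}_p$, where $[x_0,x_1]=ax_1$, $[x_0,x_2]=ax_2$; (2) $L_2(s,r,c)$ with $s,r\in\mathbb{N}$, $c\in\mathbb{Z}_p$, $v_p(c)=1$, where $[x_0,x_1]=p^sx_1+p^{s+r}cx_2$, $[x_0,x_2]=p^{s+r}x_1+p^sx_2$; (3) $L_7(s,a,c)$ with $s\in\mathbb{N}$, $a,c\in\mathbb{Z}_p$, where $[x_0,x_1]=p^sax_1+p^scx_2$, $[x_0,x_2]=p^sx_1$, provided either $v_p(c)=1$ and $v_p(a)\geqslant 1$, or $v_p(4c+a^2)=1$, $v_p(a)=0$ and $v_p(c)=0$; (4) for $p\geqslant 3$, $L_7(s,0,1)$ with $s\in\mathbb{N}$.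
   Context: $p$ is a prime (arbitrary unless stated), $\mathbb{N}=\{0,1,2,\dots\}$, $v_p$ is the $p$-adic valuation. A $\mathbb{Z}_p$-Lie lattice is a $\mathbb{Z}_p$-Lie algebra whose underlying module is finitely generated and free. A virtual endomorphism of $L$ is a homomorphism of algebras $\varphi:M\to L$ with $M\subseteq L$ a finite-index subalgebra, of index $[L:M]$. An ideal $I$ of $L$ is $\varphi$-invariant if it lies in the domain of every power of $\varphi$ and $\varphi(I)\subseteq I$; $\varphi$ is simple if no non-zero ideal is $\varphi$-invariant. $L$ is self-similar of index $p^k$ if it has a simple virtual endomorphism of index $p^k$. *)

theory Defs
  imports Main "HOL-Library.Extended_Nat" "HOL-Computational_Algebra.Primes"
begin

text \<open>An element of Z_p is represented by its compatible sequence of residues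
  x m in {0..<p^m}, with x (Suc m) mod p^m = x m.\<close>

type_synonym zp = "nat \<Rightarrow> int"

definition Zp :: "nat \<Rightarrow> zp set" where
  "Zp p = {x. \<forall>m. 0 \<le> x m \<and> x m < int p ^ m \<and> x (Suc m) mod int p ^ m = x m}"

definition zzero :: zp where "zzero = (\<lambda>m. 0)"

definition zadd :: "nat \<Rightarrow> zp \<Rightarrow> zp \<Rightarrow> zp" where
  "zadd p x y = (\<lambda>m. (x m + y m) mod int p ^ m)"

definition zmul :: "nat \<Rightarrow> zp \<Rightarrow> zp \<Rightarrow> zp" where
  "zmul p x y = (\<lambda>m. (x m * y m) mod int p ^ m)"

definition zneg :: "nat \<Rightarrow> zp \<Rightarrow> zp" where
  "zneg p x = (\<lambda>m. (- x m) mod int p ^ m)"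

definition zof_int :: "nat \<Rightarrow> int \<Rightarrow> zp" where
  "zof_int p z = (\<lambda>m. z mod int p ^ m)"

definition zval :: "nat \<Rightarrow> zp \<Rightarrow> enat" where
  "zval p x = (if x = zzero then \<infinity> else enat (LEAST n. x (Suc n) \<noteq> 0))"

type_synonym zvec = "nat \<Rightarrow> zp"

definition lat :: "nat \<Rightarrow> nat \<Rightarrow> zvec set" where
  "lat p n = {v. (\<forall>i<n. v i \<in> Zp p) \<and> (\<forall>i. n \<le> i \<longrightarrow> v i = zzero)}"

definition vzero :: zvec where "vzero = (\<lambda>i. zzero)"

definition vadd :: "nat \<Rightarrow> zvec \<Rightarrow> zvec \<Rightarrow> zvec" where
  "vadd p u v = (\<lambda>i. zadd p (u i) (v i))"

definition vneg :: "nat \<Rightarrow> zvec \<Rightarrow> zvec" where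
  "vneg p v = (\<lambda>i. zneg p (v i))"

definition vsmul :: "nat \<Rightarrow> zp \<Rightarrow> zvec \<Rightarrow> zvec" where
  "vsmul p a v = (\<lambda>i. zmul p a (v i))"

text \<open>Structure constants: C i j is the vector [x_i, x_j] (coordinates w.r.t. x_0..x_{n-1}).
  The bracket is the bilinear extension, computed level-wise modulo p^m.\<close>

definition br :: "nat \<Rightarrow> nat \<Rightarrow> (nat \<Rightarrow> nat \<Rightarrow> zvec) \<Rightarrow> zvec \<Rightarrow> zvec \<Rightarrow> zvec" where
  "br p n C u v = (\<lambda>k. if k < n then
      (\<lambda>m. (\<Sum>i<n. \<Sum>j<n. u i m * v j m * C i j k m) mod int p ^ m) else zzero)"

definition submod :: "nat \<Rightarrow> nat \<Rightarrow> zvec set \<Rightarrow> bool" where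
  "submod p n M \<longleftrightarrow> M \<subseteq> lat p n \<and> vzero \<in> M \<and>
     (\<forall>u\<in>M. \<forall>v\<in>M. vadd p u v \<in> M) \<and> (\<forall>a\<in>Zp p. \<forall>u\<in>M. vsmul p a u \<in> M)"

definition subalg :: "nat \<Rightarrow> nat \<Rightarrow> (nat \<Rightarrow> nat \<Rightarrow> zvec) \<Rightarrow> zvec set \<Rightarrow> bool" where
  "subalg p n C M \<longleftrightarrow> submod p n M \<and> (\<forall>u\<in>M. \<forall>v\<in>M. br p n C u v \<in> M)"

definition lie_ideal :: "nat \<Rightarrow> nat \<Rightarrow> (nat \<Rightarrow> nat \<Rightarrow> zvec) \<Rightarrow> zvec set \<Rightarrow> bool" where
  "lie_ideal p n C I \<longleftrightarrow> submod p n I \<and> (\<forall>x\<in>lat p n. \<forall>y\<in>I. br p n C x y \<in> I)"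

text \<open>Index [L:M] = number of cosets x + M of M in L (0 if infinite).\<close>
definition lat_index :: "nat \<Rightarrow> nat \<Rightarrow> zvec set \<Rightarrow> nat" where
  "lat_index p n M = card ((\<lambda>x. {y \<in> lat p n. vadd p y (vneg p x) \<in> M}) ` lat p n)"

definition alg_hom_on :: "nat \<Rightarrow> nat \<Rightarrow> (nat \<Rightarrow> nat \<Rightarrow> zvec) \<Rightarrow> zvec set \<Rightarrow> (zvec \<Rightarrow> zvec) \<Rightarrow> bool" where
  "alg_hom_on p n C M \<phi> \<longleftrightarrow> (\<forall>u\<in>M. \<phi> u \<in> lat p n) \<and>
     (\<forall>u\<in>M. \<forall>v\<in>M. \<phi> (vadd p u v) = vadd p (\<phi> u) (\<phi> v)) \<and>
     (\<forall>a\<in>Zp p. \<forall>u\<in>M. \<phi> (vsmul p a u) = vsmul p a (\<phi> u)) \<and>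
     (\<forall>u\<in>M. \<forall>v\<in>M. \<phi> (br p n C u v) = br p n C (\<phi> u) (\<phi> v))"

fun vdom :: "nat \<Rightarrow> nat \<Rightarrow> zvec set \<Rightarrow> (zvec \<Rightarrow> zvec) \<Rightarrow> nat \<Rightarrow> zvec set" where
  "vdom p n M \<phi> 0 = lat p n"
| "vdom p n M \<phi> (Suc j) = {x \<in> M. \<phi> x \<in> vdom p n M \<phi> j}"

definition invariant :: "nat \<Rightarrow> nat \<Rightarrow> zvec set \<Rightarrow> (zvec \<Rightarrow> zvec) \<Rightarrow> zvec set \<Rightarrow> bool" where
  "invariant p n M \<phi> I \<longleftrightarrow> (\<forall>j. I \<subseteq> vdom p n M \<phi> j) \<and> \<phi> ` I \<subseteq> I"

definition simple_ve :: "nat \<Rightarrow> nat \<Rightarrow> (nat \<Rightarrow> nat \<Rightarrow> zvec) \<Rightarrow> zvec set \<Rightarrow> (zvec \<Rightarrow> zvec) \<Rightarrow> bool" where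
  "simple_ve p n C M \<phi> \<longleftrightarrow>
     (\<forall>I. lie_ideal p n C I \<and> invariant p n M \<phi> I \<longrightarrow> I = {vzero})"

definition self_similar_index :: "nat \<Rightarrow> nat \<Rightarrow> (nat \<Rightarrow> nat \<Rightarrow> zvec) \<Rightarrow> nat \<Rightarrow> bool" where
  "self_similar_index p n C N \<longleftrightarrow>
     (\<exists>M \<phi>. subalg p n C M \<and> lat_index p n M = N \<and> alg_hom_on p n C M \<phi> \<and> simple_ve p n C M \<phi>)"

definition mkv3 :: "zp \<Rightarrow> zp \<Rightarrow> zp \<Rightarrow> zvec" where
  "mkv3 a b c = (\<lambda>i. if i = 0 then a else if i = 1 then b else if i = 2 then c else zzero)"

definition str3 :: "nat \<Rightarrow> zvec \<Rightarrow> zvec \<Rightarrow> nat \<Rightarrow> nat \<Rightarrow> zvec" where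
  "str3 p w1 w2 = (\<lambda>i j. if i = 0 \<and> j = 1 then w1 else if i = 1 \<and> j = 0 then vneg p w1
     else if i = 0 \<and> j = 2 then w2 else if i = 2 \<and> j = 0 then vneg p w2 else vzero)"

definition zpow :: "nat \<Rightarrow> nat \<Rightarrow> zp" where
  "zpow p s = zof_int p (int p ^ s)"

definition L6 :: "nat \<Rightarrow> zp \<Rightarrow> nat \<Rightarrow> nat \<Rightarrow> zvec" where
  "L6 p a = str3 p (mkv3 zzero a zzero) (mkv3 zzero zzero a)"

definition L2 :: "nat \<Rightarrow> nat \<Rightarrow> nat \<Rightarrow> zp \<Rightarrow> nat \<Rightarrow> nat \<Rightarrow> zvec" where
  "L2 p s r c = str3 p (mkv3 zzero (zpow p s) (zmul p (zpow p (s + r)) c))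
                       (mkv3 zzero (zpow p (s + r)) (zpow p s))"

definition L7 :: "nat \<Rightarrow> nat \<Rightarrow> zp \<Rightarrow> zp \<Rightarrow> nat \<Rightarrow> nat \<Rightarrow> zvec" where
  "L7 p s a c = str3 p (mkv3 zzero (zmul p (zpow p s) a) (zmul p (zpow p s) c))
                       (mkv3 zzero (zpow p s) zzero)"

end

theory Submission
  imports Defs
begin

locale pp = fixes p :: nat assumes prime_p: "prime p"
begin

lemma p1: "1 < p" using prime_p prime_gt_1_nat by blast

abbreviation P :: "nat \<Rightarrow> int" where "P m \<equiv> int p ^ m"

lemma Ppos[simp]: "0 < int p ^ m" using p1 by simp

lemma Zp_D: "x \<in> Zp p \<Longrightarrow> 0 \<le> x m \<and> x m < int p ^ m \<and> x (Suc m) mod int p ^ m = x m"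
  by (simp add: Zp_def)

lemma Zp_mod[simp]: "x \<in> Zp p \<Longrightarrow> x m mod int p ^ m = x m"
  using Zp_D[of x m] by simp

lemma Zp_0[simp]: "x \<in> Zp p \<Longrightarrow> x 0 = 0"
  using Zp_D[of x 0] by simp

lemma Zp_Suc[simp]: "x \<in> Zp p \<Longrightarrow> x (Suc m) mod int p ^ m = x m"
  using Zp_D[of x m] by simp

lemma Zp_compat: assumes "x \<in> Zp p" "m \<le> n" shows "x n mod int p ^ m = x m"
  using assms(2)
proof (induction n)
  case 0 then show ?case using assms(1) by simp
next
  case (Suc n)
  show ?case
  proof (cases "m = Suc n")
    case True show ?thesis unfolding True by (rule Zp_mod[OF assms(1)])
  next
    case False
    then have mn: "m \<le> n" using Suc by simp
    have d: "int p ^ m dvd int p ^ n" using mn by (rule le_imp_power_dvd)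
    have "x (Suc n) mod int p ^ m = (x (Suc n) mod int p ^ n) mod int p ^ m"
      by (rule mod_mod_cancel[OF d, symmetric])
    also have "x (Suc n) mod int p ^ n = x n" by (rule Zp_Suc[OF assms(1)])
    also have "x n mod int p ^ m = x m" by (rule Suc.IH[OF mn])
    finally show ?thesis .
  qed
qed

lemma Zp_I: assumes "\<And>m. x m = X m mod int p ^ m" "\<And>m. X (Suc m) mod int p ^ m = X m mod int p ^ m"
  shows "x \<in> Zp p"
  unfolding Zp_def
proof (intro CollectI allI conjI)
  fix m
  show "0 \<le> x m" unfolding assms(1) by (rule pos_mod_sign[OF Ppos])
  show "x m < int p ^ m" unfolding assms(1) by (rule pos_mod_bound[OF Ppos])
  have d: "int p ^ m dvd int p ^ Suc m" by (rule le_imp_power_dvd) simp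
  have "x (Suc m) mod int p ^ m = X (Suc m) mod int p ^ m"
    unfolding assms(1)[of "Suc m"] by (rule mod_mod_cancel[OF d])
  also have "\<dots> = x m" unfolding assms(1)[of m] by (rule assms(2))
  finally show "x (Suc m) mod int p ^ m = x m" .
qed

lemma zzero_Zp[simp]: "zzero \<in> Zp p"
  unfolding zzero_def by (rule Zp_I[where X="\<lambda>m. 0"]) simp_all

lemma zadd_Zp[simp]: assumes "x \<in> Zp p" "y \<in> Zp p" shows "zadd p x y \<in> Zp p"
  unfolding zadd_def
proof (rule Zp_I[where X="\<lambda>m. x m + y m"])
  fix m
  have "(x (Suc m) + y (Suc m)) mod int p ^ m = (x (Suc m) mod int p ^ m + y (Suc m) mod int p ^ m) mod int p ^ m" by (rule mod_add_eq[symmetric])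
  also have "\<dots> = (x m + y m) mod int p ^ m" using assms by simp
  finally show "(x (Suc m) + y (Suc m)) mod int p ^ m = (x m + y m) mod int p ^ m" .
qed simp

lemma zmul_Zp[simp]: assumes "x \<in> Zp p" "y \<in> Zp p" shows "zmul p x y \<in> Zp p"
  unfolding zmul_def
proof (rule Zp_I[where X="\<lambda>m. x m * y m"])
  fix m
  have "(x (Suc m) * y (Suc m)) mod int p ^ m = ((x (Suc m) mod int p ^ m) * (y (Suc m) mod int p ^ m)) mod int p ^ m" by (rule mod_mult_eq[symmetric])
  also have "\<dots> = (x m * y m) mod int p ^ m" using assms by simp
  finally show "(x (Suc m) * y (Suc m)) mod int p ^ m = (x m * y m) mod int p ^ m" .
qed simp

lemma zneg_Zp[simp]: assumes "x \<in> Zp p" shows "zneg p x \<in> Zp p"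
  unfolding zneg_def
proof (rule Zp_I[where X="\<lambda>m. - x m"])
  fix m
  have "(- x (Suc m)) mod int p ^ m = (- (x (Suc m) mod int p ^ m)) mod int p ^ m" by (rule mod_minus_eq[symmetric])
  also have "\<dots> = (- x m) mod int p ^ m" using assms by simp
  finally show "(- x (Suc m)) mod int p ^ m = (- x m) mod int p ^ m" .
qed simp

lemma zof_int_Zp[simp]: "zof_int p z \<in> Zp p"
  unfolding zof_int_def by (rule Zp_I[where X="\<lambda>m. z"]) (auto simp: mod_mod_cancel)

lemma zpow_Zp[simp]: "zpow p s \<in> Zp p" by (simp add: zpow_def)

lemma zp_ext: "x \<in> Zp p \<Longrightarrow> y \<in> Zp p \<Longrightarrow> (\<And>m. x m mod int p ^ m = y m mod int p ^ m) \<Longrightarrow> x = y"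
  by (rule ext) simp

lemmas zops = zadd_def zmul_def zneg_def zof_int_def zpow_def zzero_def

end

definition dv :: "nat \<Rightarrow> nat \<Rightarrow> zp \<Rightarrow> bool" where "dv p e x \<longleftrightarrow> x e = 0"
definition zdiv :: "nat \<Rightarrow> nat \<Rightarrow> zp \<Rightarrow> zp" where "zdiv p e x = (\<lambda>m. x (m + e) div int p ^ e)"
definition zunit :: "nat \<Rightarrow> zp \<Rightarrow> bool" where "zunit p u \<longleftrightarrow> u \<in> Zp p \<and> u 1 \<noteq> 0"

context pp begin

lemma p_ne0[simp]: "p \<noteq> 0" using p1 by simp
lemma p_gt0[simp]: "0 < p" using p1 by simp

lemma int_div_lt: assumes "0 < (b::int)" "x < b * c" shows "x div b < c"
proof (rule ccontr)
  assume "\<not> x div b < c"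
  then have "b * c \<le> b * (x div b)" using assms(1) by (simp add: mult_left_mono)
  also have "b * (x div b) = x - x mod b" by (simp add: minus_mod_eq_mult_div)
  also have "\<dots> \<le> x" using assms(1) by simp
  finally show False using assms(2) by simp
qed

lemma zlev: "zadd p x y m = (x m + y m) mod int p ^ m" "zmul p x y m = (x m * y m) mod int p ^ m"
  "zneg p x m = (- x m) mod int p ^ m" "zof_int p z m = z mod int p ^ m"
  "zpow p s m = (int p ^ s) mod int p ^ m" "zzero m = 0"
  by (simp_all add: zops)

lemma zp_eqI: "x \<in> Zp p \<Longrightarrow> y \<in> Zp p \<Longrightarrow> (\<And>m. x m mod int p ^ m = y m mod int p ^ m) \<Longrightarrow> x = y"
  by (rule zp_ext)

lemma dv_dvd: assumes "x \<in> Zp p" "dv p e x" "e \<le> m" shows "int p ^ e dvd x m"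
proof -
  have "x m mod int p ^ e = x e" by (rule Zp_compat[OF assms(1,3)])
  then show ?thesis using assms(2) unfolding dv_def by (simp add: dvd_eq_mod_eq_0)
qed

lemma dv_of_dvd: assumes "x \<in> Zp p" "e \<le> m" "int p ^ e dvd x m" shows "dv p e x"
proof -
  have "x m mod int p ^ e = x e" by (rule Zp_compat[OF assms(1,2)])
  then show ?thesis using assms(3) unfolding dv_def by (simp add: dvd_eq_mod_eq_0)
qed

lemma dv_0[simp]: "x \<in> Zp p \<Longrightarrow> dv p 0 x" unfolding dv_def by simp

lemma dv_mono: assumes "x \<in> Zp p" "dv p e x" "e' \<le> e" shows "dv p e' x"
proof -
  have "int p ^ e' dvd int p ^ e" using assms(3) by (rule le_imp_power_dvd)
  then have "int p ^ e' dvd x e" using dv_dvd[OF assms(1,2) order.refl] by (rule dvd_trans)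
  then show ?thesis using dv_of_dvd[OF assms(1,3)] by simp
qed

lemma dv_zzero[simp]: "dv p e zzero" unfolding dv_def zzero_def by simp

lemma dv_add: "dv p e x \<Longrightarrow> dv p e y \<Longrightarrow> dv p e (zadd p x y)"
  unfolding dv_def zadd_def by simp

lemma dv_neg: "dv p e x \<Longrightarrow> dv p e (zneg p x)"
  unfolding dv_def zneg_def by simp

lemma dv_mul: "dv p e y \<Longrightarrow> dv p e (zmul p a y)"
  unfolding dv_def zmul_def by simp

lemma dv_mul2: "dv p e y \<Longrightarrow> dv p e (zmul p y a)"
  unfolding dv_def zmul_def by simp

lemma dv_pow_mul: assumes "x \<in> Zp p" "dv p r x" shows "dv p (r + e) (zmul p (zpow p e) x)"
proof -
  have "int p ^ r dvd x (r + e)" by (rule dv_dvd[OF assms]) simp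
  then obtain q where q: "x (r + e) = int p ^ r * q" by blast
  have "(int p ^ e mod int p ^ (r + e) * x (r + e)) mod int p ^ (r + e)
      = (int p ^ e * x (r + e)) mod int p ^ (r + e)" by (simp add: mod_simps)
  also have "\<dots> = 0" unfolding q by (simp add: power_add algebra_simps)
  finally show ?thesis unfolding dv_def zmul_def zpow_def zof_int_def by simp
qed

lemma dv_pow: "x \<in> Zp p \<Longrightarrow> dv p e (zmul p (zpow p e) x)"
  using dv_pow_mul[of x 0 e] by simp

lemma zdiv_Zp[simp]: assumes "x \<in> Zp p" "dv p e x" shows "zdiv p e x \<in> Zp p"
  unfolding Zp_def zdiv_def
proof (intro CollectI allI conjI)
  fix m
  have x0: "0 \<le> x (m + e)" "x (m + e) < int p ^ (m + e)" using Zp_D[OF assms(1)] by auto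
  show "0 \<le> x (m + e) div int p ^ e" using x0 by (simp add: pos_imp_zdiv_nonneg_iff)
  show "x (m + e) div int p ^ e < int p ^ m"
    using x0 by (intro int_div_lt) (simp_all add: power_add mult.commute)
  have "int p ^ e dvd x (Suc m + e)" by (rule dv_dvd[OF assms]) simp
  then obtain a where a: "x (Suc m + e) = int p ^ e * a" by blast
  have "int p ^ e dvd x (m + e)" by (rule dv_dvd[OF assms]) simp
  then obtain b where b: "x (m + e) = int p ^ e * b" by blast
  have "x (Suc m + e) mod int p ^ (m + e) = x (m + e)" by (rule Zp_compat[OF assms(1)]) simp
  then have "int p ^ e * (a mod int p ^ m) = int p ^ e * b"
    unfolding a b by (simp add: power_add mult.commute mod_mult_mult1)
  then have "a mod int p ^ m = b" by simp
  then show "x (Suc m + e) div int p ^ e mod int p ^ m = x (m + e) div int p ^ e"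
    using a b by simp
qed

lemma zpow_zdiv: assumes "x \<in> Zp p" "dv p e x" shows "zmul p (zpow p e) (zdiv p e x) = x"
proof (rule ext)
  fix m
  have "int p ^ e dvd x (m + e)" by (rule dv_dvd[OF assms]) simp
  then obtain a where a: "x (m + e) = int p ^ e * a" by blast
  have "(int p ^ e mod int p ^ m * (x (m + e) div int p ^ e)) mod int p ^ m
      = x (m + e) mod int p ^ m" unfolding a by (simp add: mod_simps)
  also have "\<dots> = x m" by (rule Zp_compat[OF assms(1)]) simp
  finally show "zmul p (zpow p e) (zdiv p e x) m = x m"
    unfolding zmul_def zpow_def zof_int_def zdiv_def by simp
qed

lemma zpow_cancel: assumes "x \<in> Zp p" "y \<in> Zp p" "zmul p (zpow p e) x = zmul p (zpow p e) y"
  shows "x = y"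
proof (rule ext)
  fix m
  have key: "zmul p (zpow p e) z (m + e) = int p ^ e * z m" if "z \<in> Zp p" for z
  proof -
    have "zmul p (zpow p e) z (m + e) = (int p ^ e * z (m + e)) mod (int p ^ e * int p ^ m)"
      unfolding zmul_def zpow_def zof_int_def by (simp add: mod_simps power_add mult.commute)
    also have "\<dots> = int p ^ e * (z (m + e) mod int p ^ m)" by (rule mod_mult_mult1)
    also have "z (m + e) mod int p ^ m = z m" by (rule Zp_compat[OF that]) simp
    finally show ?thesis .
  qed
  show "x m = y m" using key[OF assms(1)] key[OF assms(2)] assms(3) by simp
qed

lemma zdiv_eqI: assumes "y \<in> Zp p" "x = zmul p (zpow p e) y" shows "zdiv p e x = y"
proof -
  have xz: "x \<in> Zp p" using assms by simp
  have d: "dv p e x" using assms dv_pow by simp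
  show ?thesis
    by (rule zpow_cancel[where e=e, OF zdiv_Zp[OF xz d] assms(1)]) (simp add: zpow_zdiv[OF xz d] assms(2)[symmetric])
qed

lemma dv_zdiv: assumes "x \<in> Zp p" "dv p e x" "dv p r (zdiv p e x)" shows "dv p (r + e) x"
proof -
  have "int p ^ e dvd x (r + e)" by (rule dv_dvd[OF assms(1,2)]) simp
  then obtain a where a: "x (r + e) = int p ^ e * a" by blast
  then show ?thesis using assms(3) unfolding dv_def zdiv_def by simp
qed

lemma dv_all: assumes "x \<in> Zp p" "\<And>r. dv p r x" shows "x = zzero"
  using assms(2) unfolding dv_def zzero_def by (intro ext) simp

lemma prime_int_p: "prime (int p)" using prime_p by simp

lemma not_dvd_of_mod: assumes "u \<in> Zp p" "u 1 \<noteq> 0" "1 \<le> r" shows "\<not> int p dvd u r"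
proof
  assume "int p dvd u r"
  then have "dv p 1 u" using dv_of_dvd[OF assms(1,3)] by simp
  then show False using assms(2) unfolding dv_def by simp
qed

lemma dv_unit: assumes "zunit p u" "x \<in> Zp p" "dv p r (zmul p u x)" shows "dv p r x"
proof (cases "r = 0")
  case True then show ?thesis using assms by simp
next
  case False
  have u: "u \<in> Zp p" "u 1 \<noteq> 0" using assms(1) unfolding zunit_def by auto
  have nd: "\<not> int p dvd u r" using not_dvd_of_mod[OF u] False by simp
  have cop: "coprime (int p ^ r) (u r)"
    using prime_imp_coprime[OF prime_int_p nd] by simp
  have "int p ^ r dvd u r * x r" using assms(3) unfolding dv_def zmul_def by (simp add: dvd_eq_mod_eq_0)
  then have "int p ^ r dvd x r" using cop coprime_dvd_mult_right_iff by blast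
  then have "x r mod int p ^ r = 0" by (simp add: dvd_eq_mod_eq_0)
  then show ?thesis using assms(2) unfolding dv_def by simp
qed

lemma zunit_mul: assumes "zunit p u" "zunit p v" shows "zunit p (zmul p u v)"
proof -
  have uv: "zmul p u v \<in> Zp p" using assms unfolding zunit_def by simp
  have u: "u \<in> Zp p" "u 1 \<noteq> 0" and v: "v \<in> Zp p" "v 1 \<noteq> 0" using assms unfolding zunit_def by auto
  have "\<not> int p dvd u 1" "\<not> int p dvd v 1" using not_dvd_of_mod u v by auto
  then have "\<not> int p dvd u 1 * v 1" using prime_int_p by (simp add: prime_dvd_mult_iff)
  then have "(u 1 * v 1) mod int p \<noteq> 0" by (simp add: dvd_eq_mod_eq_0)
  then show ?thesis using uv unfolding zunit_def zmul_def by simp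
qed

lemma zunit_Zp: "zunit p u \<Longrightarrow> u \<in> Zp p" unfolding zunit_def by simp

lemma zdiv_unit: assumes "c \<in> Zp p" "dv p e c" "\<not> dv p (Suc e) c" shows "zunit p (zdiv p e c)"
proof -
  have "int p ^ e dvd c (Suc e)" by (rule dv_dvd[OF assms(1,2)]) simp
  then obtain a where a: "c (Suc e) = int p ^ e * a" by blast
  have "c (Suc e) \<noteq> 0" using assms(3) unfolding dv_def by simp
  then have "a \<noteq> 0" using a by simp
  then have "zdiv p e c 1 \<noteq> 0" unfolding zdiv_def using a by simp
  then show ?thesis unfolding zunit_def using zdiv_Zp[OF assms(1,2)] by simp
qed

lemma zzero_not_unit: "zunit p u \<Longrightarrow> u \<noteq> zzero" unfolding zunit_def zzero_def by auto

lemma ex_val: assumes "a \<in> Zp p" "a \<noteq> zzero" shows "\<exists>e. dv p e a \<and> \<not> dv p (Suc e) a"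
proof -
  have "\<exists>r. \<not> dv p r a" using dv_all[OF assms(1)] assms(2) by blast
  then obtain r where r: "\<not> dv p r a" by blast
  let ?e = "LEAST r. \<not> dv p r a"
  have ne: "\<not> dv p ?e a" using r by (rule LeastI)
  have "?e \<noteq> 0" using ne assms(1) by (cases ?e) auto
  then obtain e where e: "?e = Suc e" by (cases ?e) auto
  have "dv p e a" using not_less_Least[of e "\<lambda>r. \<not> dv p r a"] e by simp
  then show ?thesis using ne e by auto
qed

lemma zmul_eq_zero: assumes "x \<in> Zp p" "a \<in> Zp p" "a \<noteq> zzero" "zmul p x a = zzero"
  shows "x = zzero"
proof -
  obtain e where e: "dv p e a" "\<not> dv p (Suc e) a" using ex_val[OF assms(2,3)] by blast
  let ?u = "zdiv p e a"
  have u: "zunit p ?u" by (rule zdiv_unit[OF assms(2) e])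
  have uz: "?u \<in> Zp p" using u zunit_Zp by blast
  have "zmul p (zpow p e) (zmul p x ?u) = zmul p x (zmul p (zpow p e) ?u)"
    by (rule zp_eqI, simp_all add: assms uz) (simp only: zlev mod_simps; simp add: algebra_simps)
  also have "\<dots> = zzero" using zpow_zdiv[OF assms(2) e(1)] assms(4) by simp
  also have "\<dots> = zmul p (zpow p e) zzero" by (simp add: zops)
  finally have "zmul p x ?u = zzero" by (rule zpow_cancel[rotated 2]) (simp_all add: assms uz)
  moreover have "zmul p ?u x = zmul p x ?u" unfolding zmul_def by (simp add: mult.commute)
  ultimately have xu: "zmul p ?u x = zzero" by simp
  have "dv p r x" for r using dv_unit[OF u assms(1), of r] xu by simp
  then show ?thesis using dv_all assms(1) by blast
qed

end

definition zsub :: "nat \<Rightarrow> zp \<Rightarrow> zp \<Rightarrow> zp" where "zsub p x y = zadd p x (zneg p y)"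

definition brc :: "nat \<Rightarrow> zvec \<Rightarrow> zvec \<Rightarrow> nat \<Rightarrow> zp \<Rightarrow> zp \<Rightarrow> zp \<Rightarrow> zp \<Rightarrow> zp \<Rightarrow> zp \<Rightarrow> zp" where
  "brc p w1 w2 k a b c a' b' c' = zadd p (zmul p (zsub p (zmul p a b') (zmul p b a')) (w1 k))
                                    (zmul p (zsub p (zmul p a c') (zmul p c a')) (w2 k))"

context pp begin

lemma zval_nz: assumes "x \<in> Zp p" "x \<noteq> zzero" shows "\<exists>n. x (Suc n) \<noteq> 0"
proof -
  obtain m where "x m \<noteq> 0" using assms(2) unfolding zzero_def by auto
  moreover have "m \<noteq> 0" using calculation Zp_0[OF assms(1)] by (cases m) auto
  ultimately show ?thesis by (cases m) auto
qed

lemma zval_1: assumes "x \<in> Zp p" "zval p x = 1" shows "dv p 1 x" "\<not> dv p 2 x"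
proof -
  have nz: "x \<noteq> zzero" using assms(2) unfolding zval_def by auto
  then have L: "(LEAST n. x (Suc n) \<noteq> 0) = 1" using assms(2) unfolding zval_def
    by (simp add: one_enat_def)
  obtain n where "x (Suc n) \<noteq> 0" using zval_nz[OF assms(1) nz] by blast
  then have "x (Suc (LEAST n. x (Suc n) \<noteq> 0)) \<noteq> 0" by (rule LeastI)
  then show "\<not> dv p 2 x" unfolding L dv_def by (simp add: numeral_2_eq_2)
  have "\<not> (x (Suc 0) \<noteq> 0)" by (rule not_less_Least) (simp add: L)
  then show "dv p 1 x" unfolding dv_def by simp
qed

lemma zval_ge1: assumes "x \<in> Zp p" "zval p x \<ge> 1" shows "dv p 1 x"
proof (cases "x = zzero")
  case True then show ?thesis by simp
next
  case False
  then have L: "(LEAST n. x (Suc n) \<noteq> 0) \<ge> 1" using assms(2) unfolding zval_def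
    by (simp add: one_enat_def)
  have "\<not> (x (Suc 0) \<noteq> 0)" by (rule not_less_Least) (use L in simp)
  then show "dv p 1 x" unfolding dv_def by simp
qed

lemma zval_0: assumes "x \<in> Zp p" "zval p x = 0" shows "zunit p x"
proof -
  have nz: "x \<noteq> zzero" using assms(2) unfolding zval_def by auto
  then have L: "(LEAST n. x (Suc n) \<noteq> 0) = 0" using assms(2) unfolding zval_def
    by (simp add: zero_enat_def)
  obtain n where "x (Suc n) \<noteq> 0" using zval_nz[OF assms(1) nz] by blast
  then have "x (Suc (LEAST n. x (Suc n) \<noteq> 0)) \<noteq> 0" by (rule LeastI)
  then show ?thesis unfolding L zunit_def using assms(1) by simp
qed

lemma mkv3_simps[simp]: "mkv3 a b c 0 = a" "mkv3 a b c (Suc 0) = b" "mkv3 a b c 2 = c" "mkv3 a b c 1 = b"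
  "3 \<le> i \<Longrightarrow> mkv3 a b c i = zzero"
  unfolding mkv3_def by auto

lemma mkv3_lat[simp]: "mkv3 a b c \<in> lat p 3 \<longleftrightarrow> a \<in> Zp p \<and> b \<in> Zp p \<and> c \<in> Zp p"
proof
  assume "mkv3 a b c \<in> lat p 3"
  then have h: "\<forall>i<3. mkv3 a b c i \<in> Zp p" unfolding lat_def by simp
  have "mkv3 a b c 0 \<in> Zp p" "mkv3 a b c 1 \<in> Zp p" "mkv3 a b c 2 \<in> Zp p" using h by (auto simp del: mkv3_simps)
  then show "a \<in> Zp p \<and> b \<in> Zp p \<and> c \<in> Zp p" by simp
next
  assume "a \<in> Zp p \<and> b \<in> Zp p \<and> c \<in> Zp p"
  then show "mkv3 a b c \<in> lat p 3" unfolding lat_def mkv3_def by auto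
qed

lemma lat3_eq: assumes "v \<in> lat p 3" shows "v = mkv3 (v 0) (v 1) (v 2)"
proof (rule ext)
  fix i show "v i = mkv3 (v 0) (v 1) (v 2) i"
    using assms unfolding lat_def mkv3_def by (cases "i < 3") (auto simp: less_Suc_eq numeral_3_eq_3)
qed

lemma lat3_Zp: assumes "v \<in> lat p 3" shows "v 0 \<in> Zp p" "v 1 \<in> Zp p" "v 2 \<in> Zp p"
  using assms unfolding lat_def by auto

lemma lat3_cases: assumes "v \<in> lat p 3"
  obtains a b c where "v = mkv3 a b c" "a \<in> Zp p" "b \<in> Zp p" "c \<in> Zp p"
  using lat3_eq[OF assms] lat3_Zp[OF assms] by blast

lemma mkv3_eq_iff[simp]: "mkv3 a b c = mkv3 a' b' c' \<longleftrightarrow> a = a' \<and> b = b' \<and> c = c'"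
proof
  assume h: "mkv3 a b c = mkv3 a' b' c'"
  show "a = a' \<and> b = b' \<and> c = c'"
    using fun_cong[OF h, of 0] fun_cong[OF h, of 1] fun_cong[OF h, of 2] by simp
qed simp

lemma zz_simps[simp]: "zadd p zzero zzero = zzero" "zmul p a zzero = zzero" "zneg p zzero = zzero"
  "zmul p zzero a = zzero"
  unfolding zops by auto

lemma vzero_mkv3: "vzero = mkv3 zzero zzero zzero"
  unfolding vzero_def mkv3_def by auto

lemma vadd_mkv3[simp]: "vadd p (mkv3 a b c) (mkv3 a' b' c') = mkv3 (zadd p a a') (zadd p b b') (zadd p c c')"
  unfolding vadd_def mkv3_def by (rule ext) auto

lemma vsmul_mkv3[simp]: "vsmul p s (mkv3 a b c) = mkv3 (zmul p s a) (zmul p s b) (zmul p s c)"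
  unfolding vsmul_def mkv3_def by (rule ext) auto

lemma vneg_mkv3[simp]: "vneg p (mkv3 a b c) = mkv3 (zneg p a) (zneg p b) (zneg p c)"
  unfolding vneg_def mkv3_def by (rule ext) auto

lemma zsub_Zp[simp]: "x \<in> Zp p \<Longrightarrow> y \<in> Zp p \<Longrightarrow> zsub p x y \<in> Zp p" unfolding zsub_def by simp

lemma br_expand: assumes "a \<in> Zp p" "b \<in> Zp p" "c \<in> Zp p" "a' \<in> Zp p" "b' \<in> Zp p" "c' \<in> Zp p"
  "k < 3"
  shows "br p 3 (str3 p w1 w2) (mkv3 a b c) (mkv3 a' b' c') k = zadd p (zmul p (zmul p a a') (str3 p w1 w2 0 0 k)) (zadd p (zmul p (zmul p a b') (str3 p w1 w2 0 1 k)) (zadd p (zmul p (zmul p a c') (str3 p w1 w2 0 2 k)) (zadd p (zmul p (zmul p b a') (str3 p w1 w2 1 0 k)) (zadd p (zmul p (zmul p b b') (str3 p w1 w2 1 1 k)) (zadd p (zmul p (zmul p b c') (str3 p w1 w2 1 2 k)) (zadd p (zmul p (zmul p c a') (str3 p w1 w2 2 0 k)) (zadd p (zmul p (zmul p c b') (str3 p w1 w2 2 1 k)) (zmul p (zmul p c c') (str3 p w1 w2 2 2 k)))))))))"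
proof (rule ext)
  fix m
  have S: "(\<Sum>i<3. \<Sum>j<3. f i j) = f 0 0 + (f 0 1 + (f 0 2 + (f 1 0 + (f 1 1 + (f 1 2 + (f 2 0 + (f 2 1 + f 2 2)))))))"
    for f :: "nat \<Rightarrow> nat \<Rightarrow> int"
    by (simp add: numeral_3_eq_3 numeral_2_eq_2 lessThan_Suc algebra_simps)
  show "br p 3 (str3 p w1 w2) (mkv3 a b c) (mkv3 a' b' c') k m = (zadd p (zmul p (zmul p a a') (str3 p w1 w2 0 0 k)) (zadd p (zmul p (zmul p a b') (str3 p w1 w2 0 1 k)) (zadd p (zmul p (zmul p a c') (str3 p w1 w2 0 2 k)) (zadd p (zmul p (zmul p b a') (str3 p w1 w2 1 0 k)) (zadd p (zmul p (zmul p b b') (str3 p w1 w2 1 1 k)) (zadd p (zmul p (zmul p b c') (str3 p w1 w2 1 2 k)) (zadd p (zmul p (zmul p c a') (str3 p w1 w2 2 0 k)) (zadd p (zmul p (zmul p c b') (str3 p w1 w2 2 1 k)) (zmul p (zmul p c c') (str3 p w1 w2 2 2 k)))))))))) m"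
    unfolding br_def S using assms(7) by (simp add: zops mod_simps mult.assoc)
qed

lemma br_str3: assumes "w1 \<in> lat p 3" "w2 \<in> lat p 3" "w1 0 = zzero" "w2 0 = zzero"
  "a \<in> Zp p" "b \<in> Zp p" "c \<in> Zp p" "a' \<in> Zp p" "b' \<in> Zp p" "c' \<in> Zp p"
  shows "br p 3 (str3 p w1 w2) (mkv3 a b c) (mkv3 a' b' c') =
     mkv3 zzero (brc p w1 w2 1 a b c a' b' c') (brc p w1 w2 2 a b c a' b' c')"
proof (rule ext)
  fix k
  have w: "w1 1 \<in> Zp p" "w1 2 \<in> Zp p" "w2 1 \<in> Zp p" "w2 2 \<in> Zp p" "w1 (Suc 0) \<in> Zp p" "w2 (Suc 0) \<in> Zp p"
    using lat3_Zp assms(1,2) by auto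
  show "br p 3 (str3 p w1 w2) (mkv3 a b c) (mkv3 a' b' c') k =
     mkv3 zzero (brc p w1 w2 1 a b c a' b' c') (brc p w1 w2 2 a b c a' b' c') k"
  proof (cases "k < 3")
    case False then show ?thesis unfolding br_def by simp
  next
    case True
    then have k: "k = 0 \<or> k = 1 \<or> k = 2" by auto
    have e: "br p 3 (str3 p w1 w2) (mkv3 a b c) (mkv3 a' b' c') k = zadd p (zmul p (zmul p a a') (str3 p w1 w2 0 0 k)) (zadd p (zmul p (zmul p a b') (str3 p w1 w2 0 1 k)) (zadd p (zmul p (zmul p a c') (str3 p w1 w2 0 2 k)) (zadd p (zmul p (zmul p b a') (str3 p w1 w2 1 0 k)) (zadd p (zmul p (zmul p b b') (str3 p w1 w2 1 1 k)) (zadd p (zmul p (zmul p b c') (str3 p w1 w2 1 2 k)) (zadd p (zmul p (zmul p c a') (str3 p w1 w2 2 0 k)) (zadd p (zmul p (zmul p c b') (str3 p w1 w2 2 1 k)) (zmul p (zmul p c c') (str3 p w1 w2 2 2 k)))))))))"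
      by (rule br_expand[OF assms(5-10) True])
    from k show ?thesis
    proof (elim disjE)
      assume k0: "k = 0" show ?thesis unfolding e unfolding k0 by (simp add: str3_def vneg_def vzero_def assms(3,4))
    next
      assume k1: "k = 1"
      show ?thesis unfolding e unfolding k1
        by (rule zp_eqI) (simp_all add: str3_def vneg_def vzero_def assms w brc_def zsub_def,
          (simp only: zlev mod_simps; simp add: algebra_simps))
    next
      assume k1: "k = 2"
      show ?thesis unfolding e unfolding k1
        by (rule zp_eqI) (simp_all add: str3_def vneg_def vzero_def assms w brc_def zsub_def,
          (simp only: zlev mod_simps; simp add: algebra_simps))
    qed
  qed
qed

end

definition lin :: "nat \<Rightarrow> zp \<Rightarrow> zp \<Rightarrow> zp \<Rightarrow> zp \<Rightarrow> zp" where
  "lin p a b x y = zadd p (zmul p a x) (zmul p b y)"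
definition tt1 :: "nat \<Rightarrow> nat \<Rightarrow> zp \<Rightarrow> zp" where "tt1 p E1 d1 = zmul p (zpow p E1) d1"
definition tt2 :: "nat \<Rightarrow> nat \<Rightarrow> nat \<Rightarrow> zp \<Rightarrow> zp \<Rightarrow> zp \<Rightarrow> zp" where
  "tt2 p E1 E2 t d1 d2 = zsub p (zmul p (zpow p E2) d2) (zmul p t (tt1 p E1 d1))"

context pp begin
lemma lin_Zp[simp]: "a \<in> Zp p \<Longrightarrow> b \<in> Zp p \<Longrightarrow> x \<in> Zp p \<Longrightarrow> y \<in> Zp p \<Longrightarrow> lin p a b x y \<in> Zp p"
  unfolding lin_def by simp
lemma tt1_Zp[simp]: "d1 \<in> Zp p \<Longrightarrow> tt1 p E1 d1 \<in> Zp p" unfolding tt1_def by simp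
lemma tt2_Zp[simp]: "t \<in> Zp p \<Longrightarrow> d1 \<in> Zp p \<Longrightarrow> d2 \<in> Zp p \<Longrightarrow> tt2 p E1 E2 t d1 d2 \<in> Zp p"
  unfolding tt2_def by simp
lemma zof_int_1_lev: "zof_int p 1 m = 1 mod int p ^ m" by (simp add: zops)
end

locale gl = pp +
  fixes w1 w2 :: zvec and E1 E2 :: nat and t sg m11 m12 m21 m22 :: zp
  assumes w_lat: "w1 \<in> lat p 3" "w2 \<in> lat p 3" and w0: "w1 0 = zzero" "w2 0 = zzero"
  and pars: "t \<in> Zp p" "sg \<in> Zp p" "m11 \<in> Zp p" "m12 \<in> Zp p" "m21 \<in> Zp p" "m22 \<in> Zp p"
  and sig: "zmul p sg sg = zof_int p 1"
  and HA: "\<And>d1 d2. d1 \<in> Zp p \<Longrightarrow> d2 \<in> Zp p \<Longrightarrow> \<exists>e1\<in>Zp p. \<exists>e2\<in>Zp p.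
     lin p (w1 1) (w2 1) (tt1 p E1 d1) (tt2 p E1 E2 t d1 d2) = tt1 p E1 e1 \<and>
     lin p (w1 2) (w2 2) (tt1 p E1 d1) (tt2 p E1 E2 t d1 d2) = tt2 p E1 E2 t e1 e2 \<and>
     lin p m11 m12 e1 e2 = zmul p sg (lin p (w1 1) (w2 1) (lin p m11 m12 d1 d2) (lin p m21 m22 d1 d2)) \<and>
     lin p m21 m22 e1 e2 = zmul p sg (lin p (w1 2) (w2 2) (lin p m11 m12 d1 d2) (lin p m21 m22 d1 d2))"
  and HU: "\<And>d1 d2 d1' d2' r. d1 \<in> Zp p \<Longrightarrow> d2 \<in> Zp p \<Longrightarrow> d1' \<in> Zp p \<Longrightarrow> d2' \<in> Zp p \<Longrightarrow>
     tt1 p E1 d1' = lin p m11 m12 d1 d2 \<Longrightarrow> tt2 p E1 E2 t d1' d2' = lin p m21 m22 d1 d2 \<Longrightarrow>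
     dv p r (lin p m11 m12 d1' d2') \<Longrightarrow> dv p r (lin p m21 m22 d1' d2') \<Longrightarrow>
     dv p (Suc r) (tt1 p E1 d1) \<and> dv p (Suc r) (tt2 p E1 E2 t d1 d2)"
  and HN: "w1 1 \<noteq> zzero \<or> w1 2 \<noteq> zzero \<or> w2 1 \<noteq> zzero \<or> w2 2 \<noteq> zzero"
begin

lemma wZ[simp]: "w1 1 \<in> Zp p" "w1 2 \<in> Zp p" "w2 1 \<in> Zp p" "w2 2 \<in> Zp p" "w1 (Suc 0) \<in> Zp p" "w2 (Suc 0) \<in> Zp p"
  using lat3_Zp w_lat by auto

lemmas parsZ[simp] = pars

definition "Mg = {v \<in> lat p 3. dv p E1 (v 1) \<and> dv p E2 (zadd p (zmul p t (v 1)) (v 2))}"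
definition "rep a d1 d2 = mkv3 a (tt1 p E1 d1) (tt2 p E1 E2 t d1 d2)"
definition "DD1 v = zdiv p E1 (v 1)"
definition "DD2 v = zdiv p E2 (zadd p (zmul p t (v 1)) (v 2))"
definition "phi v = mkv3 (zmul p sg (v 0)) (lin p m11 m12 (DD1 v) (DD2 v)) (lin p m21 m22 (DD1 v) (DD2 v))"

lemma rep_lat[simp]: "a \<in> Zp p \<Longrightarrow> d1 \<in> Zp p \<Longrightarrow> d2 \<in> Zp p \<Longrightarrow> rep a d1 d2 \<in> lat p 3"
  unfolding rep_def by simp

lemma tsum: assumes "d1 \<in> Zp p" "d2 \<in> Zp p"
  shows "zadd p (zmul p t (tt1 p E1 d1)) (tt2 p E1 E2 t d1 d2) = zmul p (zpow p E2) d2"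
  by (rule zp_eqI) (simp_all add: assms tt2_def tt1_def zsub_def, (simp only: zlev mod_simps; simp add: algebra_simps))

lemma rep_Mg: assumes "a \<in> Zp p" "d1 \<in> Zp p" "d2 \<in> Zp p" shows "rep a d1 d2 \<in> Mg"
proof -
  have "dv p E1 (tt1 p E1 d1)" unfolding tt1_def using assms by (simp add: dv_pow)
  then show ?thesis unfolding Mg_def using assms by (simp add: rep_def tsum dv_pow)
qed

lemma DD_rep: assumes "a \<in> Zp p" "d1 \<in> Zp p" "d2 \<in> Zp p"
  shows "DD1 (rep a d1 d2) = d1" "DD2 (rep a d1 d2) = d2"
  unfolding DD1_def DD2_def rep_def using assms
  by (simp_all add: tsum zdiv_eqI tt1_def[symmetric])

lemma Mg_rep: assumes "v \<in> Mg" shows "v = rep (v 0) (DD1 v) (DD2 v)"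
  "v 0 \<in> Zp p" "DD1 v \<in> Zp p" "DD2 v \<in> Zp p"
proof -
  have v: "v \<in> lat p 3" "dv p E1 (v 1)" "dv p E2 (zadd p (zmul p t (v 1)) (v 2))" using assms unfolding Mg_def by auto
  have vz: "v 0 \<in> Zp p" "v 1 \<in> Zp p" "v 2 \<in> Zp p" "v (Suc 0) \<in> Zp p" using lat3_Zp v(1) by auto
  show "v 0 \<in> Zp p" by (rule vz)
  show d1z: "DD1 v \<in> Zp p" unfolding DD1_def using vz v by simp
  show d2z: "DD2 v \<in> Zp p" unfolding DD2_def using vz v by simp
  have e1: "tt1 p E1 (DD1 v) = v 1" unfolding tt1_def DD1_def by (rule zpow_zdiv) (use vz v in auto)
  have e2: "zmul p (zpow p E2) (DD2 v) = zadd p (zmul p t (v 1)) (v 2)" unfolding DD2_def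
    by (rule zpow_zdiv) (use vz v in auto)
  have "tt2 p E1 E2 t (DD1 v) (DD2 v) = zsub p (zadd p (zmul p t (v 1)) (v 2)) (zmul p t (v 1))"
    unfolding tt2_def e1 e2 ..
  also have "\<dots> = v 2"
    by (rule zp_eqI) (simp_all add: vz zsub_def, (simp only: zlev mod_simps; simp add: algebra_simps vz))
  finally have e3: "tt2 p E1 E2 t (DD1 v) (DD2 v) = v 2" .
  show "v = rep (v 0) (DD1 v) (DD2 v)" unfolding rep_def e1 e3 by (rule lat3_eq[OF v(1)])
qed

lemma Mg_cases: assumes "v \<in> Mg"
  obtains a d1 d2 where "v = rep a d1 d2" "a \<in> Zp p" "d1 \<in> Zp p" "d2 \<in> Zp p"
  using Mg_rep[OF assms] by blast

lemma phi_rep: assumes "a \<in> Zp p" "d1 \<in> Zp p" "d2 \<in> Zp p"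
  shows "phi (rep a d1 d2) = mkv3 (zmul p sg a) (lin p m11 m12 d1 d2) (lin p m21 m22 d1 d2)"
  unfolding phi_def DD_rep[OF assms] by (simp add: rep_def)

end

context gl begin

lemma ZS[simp]: "zof_int p 1 \<in> Zp p" by simp

lemma br_lin: assumes "a \<in> Zp p" "b \<in> Zp p" "c \<in> Zp p" "a' \<in> Zp p" "b' \<in> Zp p" "c' \<in> Zp p"
  shows "br p 3 (str3 p w1 w2) (mkv3 a b c) (mkv3 a' b' c') =
   mkv3 zzero (zsub p (zmul p a (lin p (w1 1) (w2 1) b' c')) (zmul p a' (lin p (w1 1) (w2 1) b c)))
              (zsub p (zmul p a (lin p (w1 2) (w2 2) b' c')) (zmul p a' (lin p (w1 2) (w2 2) b c)))"
  unfolding br_str3[OF w_lat w0 assms] mkv3_eq_iff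
  by (intro conjI refl; rule zp_eqI; simp_all add: assms brc_def lin_def zsub_def;
      (simp only: zlev mod_simps; simp add: algebra_simps assms))

lemma vzero_rep: "vzero = rep zzero zzero zzero"
  unfolding vzero_mkv3 rep_def mkv3_eq_iff
  by (intro conjI refl; rule zp_eqI; simp_all add: tt1_def tt2_def zsub_def;
      (simp only: zlev mod_simps; simp add: algebra_simps))

lemma vadd_rep: assumes "a \<in> Zp p" "d1 \<in> Zp p" "d2 \<in> Zp p" "a' \<in> Zp p" "d1' \<in> Zp p" "d2' \<in> Zp p"
  shows "vadd p (rep a d1 d2) (rep a' d1' d2') = rep (zadd p a a') (zadd p d1 d1') (zadd p d2 d2')"
  unfolding rep_def vadd_mkv3 mkv3_eq_iff
  by (intro conjI refl; rule zp_eqI; simp_all add: assms tt1_def tt2_def zsub_def;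
      (simp only: zlev mod_simps; simp add: algebra_simps assms))

lemma vsmul_rep: assumes "s \<in> Zp p" "a \<in> Zp p" "d1 \<in> Zp p" "d2 \<in> Zp p"
  shows "vsmul p s (rep a d1 d2) = rep (zmul p s a) (zmul p s d1) (zmul p s d2)"
  unfolding rep_def vsmul_mkv3 mkv3_eq_iff
  by (intro conjI refl; rule zp_eqI; simp_all add: assms tt1_def tt2_def zsub_def;
      (simp only: zlev mod_simps; simp add: algebra_simps assms))

lemma br_rep: assumes "a \<in> Zp p" "d1 \<in> Zp p" "d2 \<in> Zp p" "a' \<in> Zp p" "d1' \<in> Zp p" "d2' \<in> Zp p"
  and "e1 \<in> Zp p" "e2 \<in> Zp p" "e1' \<in> Zp p" "e2' \<in> Zp p"
  and h1: "lin p (w1 1) (w2 1) (tt1 p E1 d1) (tt2 p E1 E2 t d1 d2) = tt1 p E1 e1"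
  and h2: "lin p (w1 2) (w2 2) (tt1 p E1 d1) (tt2 p E1 E2 t d1 d2) = tt2 p E1 E2 t e1 e2"
  and h1': "lin p (w1 1) (w2 1) (tt1 p E1 d1') (tt2 p E1 E2 t d1' d2') = tt1 p E1 e1'"
  and h2': "lin p (w1 2) (w2 2) (tt1 p E1 d1') (tt2 p E1 E2 t d1' d2') = tt2 p E1 E2 t e1' e2'"
  shows "br p 3 (str3 p w1 w2) (rep a d1 d2) (rep a' d1' d2') =
     rep zzero (zsub p (zmul p a e1') (zmul p a' e1)) (zsub p (zmul p a e2') (zmul p a' e2))"
proof -
  have "br p 3 (str3 p w1 w2) (rep a d1 d2) (rep a' d1' d2') =
   mkv3 zzero (zsub p (zmul p a (lin p (w1 1) (w2 1) (tt1 p E1 d1') (tt2 p E1 E2 t d1' d2'))) (zmul p a' (lin p (w1 1) (w2 1) (tt1 p E1 d1) (tt2 p E1 E2 t d1 d2))))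
              (zsub p (zmul p a (lin p (w1 2) (w2 2) (tt1 p E1 d1') (tt2 p E1 E2 t d1' d2'))) (zmul p a' (lin p (w1 2) (w2 2) (tt1 p E1 d1) (tt2 p E1 E2 t d1 d2))))"
    unfolding rep_def by (rule br_lin) (simp_all add: assms)
  also have "\<dots> = rep zzero (zsub p (zmul p a e1') (zmul p a' e1)) (zsub p (zmul p a e2') (zmul p a' e2))"
    unfolding h1 h2 h1' h2' rep_def mkv3_eq_iff
    by (intro conjI refl; rule zp_eqI; simp_all add: assms tt1_def tt2_def zsub_def;
      (simp only: zlev mod_simps; simp add: algebra_simps assms))
  finally show ?thesis .
qed

lemma HA': assumes "d1 \<in> Zp p" "d2 \<in> Zp p"
  obtains e1 e2 where "e1 \<in> Zp p" "e2 \<in> Zp p"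
     "lin p (w1 1) (w2 1) (tt1 p E1 d1) (tt2 p E1 E2 t d1 d2) = tt1 p E1 e1"
     "lin p (w1 2) (w2 2) (tt1 p E1 d1) (tt2 p E1 E2 t d1 d2) = tt2 p E1 E2 t e1 e2"
     "lin p m11 m12 e1 e2 = zmul p sg (lin p (w1 1) (w2 1) (lin p m11 m12 d1 d2) (lin p m21 m22 d1 d2))"
     "lin p m21 m22 e1 e2 = zmul p sg (lin p (w1 2) (w2 2) (lin p m11 m12 d1 d2) (lin p m21 m22 d1 d2))"
  using HA[OF assms] by blast

lemma Mg_sub: "Mg \<subseteq> lat p 3" unfolding Mg_def by auto

lemma subalg_Mg: "subalg p 3 (str3 p w1 w2) Mg"
  unfolding subalg_def submod_def
proof (intro conjI ballI Mg_sub)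
  show "vzero \<in> Mg" unfolding vzero_rep by (rule rep_Mg) simp_all
next
  fix u v assume "u \<in> Mg" "v \<in> Mg"
  then obtain a d1 d2 a' d1' d2' where u: "u = rep a d1 d2" "a \<in> Zp p" "d1 \<in> Zp p" "d2 \<in> Zp p"
    and v: "v = rep a' d1' d2'" "a' \<in> Zp p" "d1' \<in> Zp p" "d2' \<in> Zp p" by (metis Mg_cases)
  show "vadd p u v \<in> Mg" unfolding u v by (simp add: vadd_rep u v rep_Mg)
  obtain e1 e2 where e: "e1 \<in> Zp p" "e2 \<in> Zp p"
     "lin p (w1 1) (w2 1) (tt1 p E1 d1) (tt2 p E1 E2 t d1 d2) = tt1 p E1 e1"
     "lin p (w1 2) (w2 2) (tt1 p E1 d1) (tt2 p E1 E2 t d1 d2) = tt2 p E1 E2 t e1 e2"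
    using HA'[OF u(3,4)] by metis
  obtain e1' e2' where e': "e1' \<in> Zp p" "e2' \<in> Zp p"
     "lin p (w1 1) (w2 1) (tt1 p E1 d1') (tt2 p E1 E2 t d1' d2') = tt1 p E1 e1'"
     "lin p (w1 2) (w2 2) (tt1 p E1 d1') (tt2 p E1 E2 t d1' d2') = tt2 p E1 E2 t e1' e2'"
    using HA'[OF v(3,4)] by metis
  show "br p 3 (str3 p w1 w2) u v \<in> Mg" unfolding u v
    by (subst br_rep[OF u(2-4) v(2-4) e(1,2) e'(1,2) e(3,4) e'(3,4)]) (rule rep_Mg, simp_all add: u v e e')
next
  fix s u assume "s \<in> Zp p" "u \<in> Mg"
  then obtain a d1 d2 where u: "u = rep a d1 d2" "a \<in> Zp p" "d1 \<in> Zp p" "d2 \<in> Zp p" by (metis Mg_cases)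
  show "vsmul p s u \<in> Mg" unfolding u by (simp add: vsmul_rep u \<open>s \<in> Zp p\<close> rep_Mg)
qed

end

context gl begin

lemma phi_lat: assumes "u \<in> Mg" shows "phi u \<in> lat p 3"
proof -
  obtain a d1 d2 where u: "u = rep a d1 d2" "a \<in> Zp p" "d1 \<in> Zp p" "d2 \<in> Zp p" using Mg_cases[OF assms] by metis
  show ?thesis unfolding u phi_rep[OF u(2-4)] using u by simp
qed

lemma hom_phi: "alg_hom_on p 3 (str3 p w1 w2) Mg phi"
  unfolding alg_hom_on_def
proof (intro conjI ballI phi_lat)
  fix u v assume "u \<in> Mg" "v \<in> Mg"
  then obtain a d1 d2 a' d1' d2' where u: "u = rep a d1 d2" "a \<in> Zp p" "d1 \<in> Zp p" "d2 \<in> Zp p"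
    and v: "v = rep a' d1' d2'" "a' \<in> Zp p" "d1' \<in> Zp p" "d2' \<in> Zp p" by (metis Mg_cases)
  show "phi (vadd p u v) = vadd p (phi u) (phi v)"
    unfolding u v vadd_rep[OF u(2-4) v(2-4)] phi_rep[OF u(2-4)] phi_rep[OF v(2-4)]
    apply (subst phi_rep, simp_all add: u v)
    by (intro conjI; rule zp_eqI; simp_all add: u v lin_def;
      (simp only: zlev mod_simps; simp add: algebra_simps u v))
  obtain e1 e2 where e: "e1 \<in> Zp p" "e2 \<in> Zp p"
     "lin p (w1 1) (w2 1) (tt1 p E1 d1) (tt2 p E1 E2 t d1 d2) = tt1 p E1 e1"
     "lin p (w1 2) (w2 2) (tt1 p E1 d1) (tt2 p E1 E2 t d1 d2) = tt2 p E1 E2 t e1 e2"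
     "lin p m11 m12 e1 e2 = zmul p sg (lin p (w1 1) (w2 1) (lin p m11 m12 d1 d2) (lin p m21 m22 d1 d2))"
     "lin p m21 m22 e1 e2 = zmul p sg (lin p (w1 2) (w2 2) (lin p m11 m12 d1 d2) (lin p m21 m22 d1 d2))"
    using HA'[OF u(3,4)] by metis
  obtain e1' e2' where e': "e1' \<in> Zp p" "e2' \<in> Zp p"
     "lin p (w1 1) (w2 1) (tt1 p E1 d1') (tt2 p E1 E2 t d1' d2') = tt1 p E1 e1'"
     "lin p (w1 2) (w2 2) (tt1 p E1 d1') (tt2 p E1 E2 t d1' d2') = tt2 p E1 E2 t e1' e2'"
     "lin p m11 m12 e1' e2' = zmul p sg (lin p (w1 1) (w2 1) (lin p m11 m12 d1' d2') (lin p m21 m22 d1' d2'))"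
     "lin p m21 m22 e1' e2' = zmul p sg (lin p (w1 2) (w2 2) (lin p m11 m12 d1' d2') (lin p m21 m22 d1' d2'))"
    using HA'[OF v(3,4)] by metis
  have Z: "zsub p (zmul p a e1') (zmul p a' e1) \<in> Zp p" "zsub p (zmul p a e2') (zmul p a' e2) \<in> Zp p"
    using u v e e' by simp_all
  have L1: "lin p mA mB (zsub p (zmul p a e1') (zmul p a' e1)) (zsub p (zmul p a e2') (zmul p a' e2))
     = zsub p (zmul p a (lin p mA mB e1' e2')) (zmul p a' (lin p mA mB e1 e2))"
    if "mA \<in> Zp p" "mB \<in> Zp p" for mA mB
    by (rule zp_eqI; simp_all add: u v e e' that lin_def zsub_def;
      (simp only: zlev mod_simps; simp add: algebra_simps u v e e' that))
  show "phi (br p 3 (str3 p w1 w2) u v) = br p 3 (str3 p w1 w2) (phi u) (phi v)"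
    unfolding u v br_rep[OF u(2-4) v(2-4) e(1,2) e'(1,2) e(3,4) e'(3,4)] phi_rep[OF u(2-4)] phi_rep[OF v(2-4)]
    unfolding phi_rep[OF zzero_Zp Z]
    apply (subst br_lin, simp_all add: u v)
    unfolding L1[OF pars(3,4)] L1[OF pars(5,6)] e(5,6) e'(5,6)
    by (intro conjI; rule zp_eqI; simp_all add: u v zsub_def;
      (simp only: zlev mod_simps; simp add: algebra_simps u v))
next
  fix s u assume "s \<in> Zp p" "u \<in> Mg"
  then obtain a d1 d2 where u: "u = rep a d1 d2" "a \<in> Zp p" "d1 \<in> Zp p" "d2 \<in> Zp p" by (metis Mg_cases)
  show "phi (vsmul p s u) = vsmul p s (phi u)"
    unfolding u vsmul_rep[OF \<open>s \<in> Zp p\<close> u(2-4)] phi_rep[OF u(2-4)]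
    apply (subst phi_rep, simp_all add: u \<open>s \<in> Zp p\<close>)
    by (intro conjI; rule zp_eqI; simp_all add: u \<open>s \<in> Zp p\<close> lin_def;
      (simp only: zlev mod_simps; simp add: algebra_simps u \<open>s \<in> Zp p\<close>))
qed

end

context gl begin

lemma vdom_SS: "vdom p 3 Mg phi (Suc (Suc j)) = {x \<in> Mg. phi x \<in> Mg \<and> phi (phi x) \<in> vdom p 3 Mg phi j}"
  by auto

lemma zer_ind: "z \<in> vdom p 3 Mg phi (2 * n) \<Longrightarrow> z 0 = zzero \<Longrightarrow> dv p n (z 1) \<and> dv p n (z 2)"
proof (induction n arbitrary: z)
  case 0
  then have "z \<in> lat p 3" by simp
  then show ?case using lat3_Zp by simp
next
  case (Suc n)
  have "2 * Suc n = Suc (Suc (2 * n))" by simp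
  then have zz: "z \<in> Mg" "phi z \<in> Mg" "phi (phi z) \<in> vdom p 3 Mg phi (2 * n)"
    using Suc.prems(1) vdom_SS by auto
  obtain a d1 d2 where z: "z = rep a d1 d2" "a \<in> Zp p" "d1 \<in> Zp p" "d2 \<in> Zp p" using Mg_cases[OF zz(1)] by metis
  have a0: "a = zzero" using Suc.prems(2) z(1) unfolding rep_def by simp
  have pz: "phi z = mkv3 zzero (lin p m11 m12 d1 d2) (lin p m21 m22 d1 d2)"
  proof -
    have "phi z = phi (rep zzero d1 d2)" using z(1) a0 by simp
    also have "\<dots> = mkv3 (zmul p sg zzero) (lin p m11 m12 d1 d2) (lin p m21 m22 d1 d2)"
      by (rule phi_rep) (simp_all add: z)
    finally show ?thesis by simp
  qed
  obtain a' d1' d2' where z': "phi z = rep a' d1' d2'" "a' \<in> Zp p" "d1' \<in> Zp p" "d2' \<in> Zp p"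
    using Mg_cases[OF zz(2)] by metis
  have eqs: "tt1 p E1 d1' = lin p m11 m12 d1 d2" "tt2 p E1 E2 t d1' d2' = lin p m21 m22 d1 d2" "a' = zzero"
    using z'(1) unfolding pz rep_def by auto
  have ppz: "phi (phi z) = mkv3 zzero (lin p m11 m12 d1' d2') (lin p m21 m22 d1' d2')"
  proof -
    have "phi (phi z) = phi (rep zzero d1' d2')" using z'(1) eqs(3) by simp
    also have "\<dots> = mkv3 (zmul p sg zzero) (lin p m11 m12 d1' d2') (lin p m21 m22 d1' d2')"
      by (rule phi_rep) (simp_all add: z')
    finally show ?thesis by simp
  qed
  have "dv p n (lin p m11 m12 d1' d2') \<and> dv p n (lin p m21 m22 d1' d2')"
    using Suc.IH[OF zz(3)] unfolding ppz by simp
  then have "dv p (Suc n) (tt1 p E1 d1) \<and> dv p (Suc n) (tt2 p E1 E2 t d1 d2)"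
    using HU[OF z(3,4) z'(3,4) eqs(1,2)] by blast
  then show ?case unfolding z rep_def by simp
qed

lemma zer: assumes "\<And>j. z \<in> vdom p 3 Mg phi j" "z 0 = zzero" shows "z = vzero"
proof -
  have zl: "z \<in> lat p 3" using assms(1)[of 0] by simp
  have "\<And>n. dv p n (z 1) \<and> dv p n (z 2)" using zer_ind assms by blast
  then have "z 1 = zzero" "z 2 = zzero" using dv_all lat3_Zp[OF zl] by auto
  then show ?thesis using lat3_eq[OF zl] assms(2) by (simp add: vzero_mkv3)
qed

lemma simple_phi: "simple_ve p 3 (str3 p w1 w2) Mg phi"
  unfolding simple_ve_def
proof (intro allI impI)
  fix I assume h: "lie_ideal p 3 (str3 p w1 w2) I \<and> invariant p 3 Mg phi I"
  have sub: "I \<subseteq> lat p 3" "vzero \<in> I" using h unfolding lie_ideal_def submod_def by auto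
  have id: "\<And>x y. x \<in> lat p 3 \<Longrightarrow> y \<in> I \<Longrightarrow> br p 3 (str3 p w1 w2) x y \<in> I"
    using h unfolding lie_ideal_def by auto
  have inv: "\<And>y j. y \<in> I \<Longrightarrow> y \<in> vdom p 3 Mg phi j" using h unfolding invariant_def by auto
  have "y = vzero" if y: "y \<in> I" for y
  proof -
    have yl: "y \<in> lat p 3" using y sub by auto
    obtain al b c where yy: "y = mkv3 al b c" "al \<in> Zp p" "b \<in> Zp p" "c \<in> Zp p" using lat3_cases[OF yl] by metis
    have kill: "zmul p al A = zzero \<and> zmul p al B = zzero" if xl: "x \<in> lat p 3" and
      bx: "br p 3 (str3 p w1 w2) x y = mkv3 zzero (zneg p (zmul p al A)) (zneg p (zmul p al B))"
      and AB: "A \<in> Zp p" "B \<in> Zp p" for x A B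
    proof -
      have "br p 3 (str3 p w1 w2) x y = vzero"
        by (rule zer) (use inv[OF id[OF xl y]] bx in simp_all)
      then have "zneg p (zmul p al A) = zzero" "zneg p (zmul p al B) = zzero" unfolding bx vzero_mkv3 by simp_all
      then have "zneg p (zneg p (zmul p al A)) = zzero" "zneg p (zneg p (zmul p al B)) = zzero" by simp_all
      moreover have "zneg p (zneg p (zmul p al A)) = zmul p al A" "zneg p (zneg p (zmul p al B)) = zmul p al B"
        by (rule zp_eqI; simp_all add: yy AB; (simp only: zlev mod_simps; simp add: algebra_simps yy AB))+
      ultimately show ?thesis by simp
    qed
    have b1: "br p 3 (str3 p w1 w2) (mkv3 zzero (zof_int p 1) zzero) y =
       mkv3 zzero (zneg p (zmul p al (w1 1))) (zneg p (zmul p al (w1 2)))"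
      unfolding yy by (subst br_lin; simp_all add: yy; intro conjI;
        rule zp_eqI; simp_all add: yy lin_def zsub_def; (simp only: zlev mod_simps; simp add: algebra_simps yy))
    have b2: "br p 3 (str3 p w1 w2) (mkv3 zzero zzero (zof_int p 1)) y =
       mkv3 zzero (zneg p (zmul p al (w2 1))) (zneg p (zmul p al (w2 2)))"
      unfolding yy by (subst br_lin; simp_all add: yy; intro conjI;
        rule zp_eqI; simp_all add: yy lin_def zsub_def; (simp only: zlev mod_simps; simp add: algebra_simps yy))
    have k1: "zmul p al (w1 1) = zzero \<and> zmul p al (w1 2) = zzero" by (rule kill[OF _ b1]) simp_all
    have k2: "zmul p al (w2 1) = zzero \<and> zmul p al (w2 2) = zzero" by (rule kill[OF _ b2]) simp_all
    have al0: "al = zzero" using HN k1 k2 zmul_eq_zero[OF yy(2)] wZ by blast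
    show "y = vzero" by (rule zer) (use inv[OF y] yy al0 in simp_all)
  qed
  then show "I = {vzero}" using sub by auto
qed

end

definition Mset :: "nat \<Rightarrow> nat \<Rightarrow> nat \<Rightarrow> zp \<Rightarrow> zvec set" where
  "Mset p E1 E2 t = {v \<in> lat p 3. dv p E1 (v 1) \<and> dv p E2 (zadd p (zmul p t (v 1)) (v 2))}"

context pp begin

lemma dv_sub_iff: assumes "x \<in> Zp p" "y \<in> Zp p" shows "dv p e (zadd p y (zneg p x)) \<longleftrightarrow> y e = x e"
proof -
  have "dv p e (zadd p y (zneg p x)) \<longleftrightarrow> (y e - x e) mod int p ^ e = 0"
    unfolding dv_def zlev by (simp add: mod_simps)
  also have "\<dots> \<longleftrightarrow> y e mod int p ^ e = x e mod int p ^ e" by (simp add: mod_eq_dvd_iff dvd_eq_mod_eq_0)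
  also have "\<dots> \<longleftrightarrow> y e = x e" using assms by simp
  finally show ?thesis .
qed

definition hh :: "nat \<Rightarrow> nat \<Rightarrow> zp \<Rightarrow> zvec \<Rightarrow> int \<times> int" where
  "hh E1 E2 t v = (v 1 E1, zadd p (zmul p t (v 1)) (v 2) E2)"

lemma coset_eq: assumes "t \<in> Zp p" "x \<in> lat p 3" "y \<in> lat p 3"
  shows "vadd p y (vneg p x) \<in> Mset p E1 E2 t \<longleftrightarrow> hh E1 E2 t y = hh E1 E2 t x"
proof -
  obtain x0 x1 x2 where x: "x = mkv3 x0 x1 x2" "x0 \<in> Zp p" "x1 \<in> Zp p" "x2 \<in> Zp p" using lat3_cases[OF assms(2)] by metis
  obtain y0 y1 y2 where y: "y = mkv3 y0 y1 y2" "y0 \<in> Zp p" "y1 \<in> Zp p" "y2 \<in> Zp p" using lat3_cases[OF assms(3)] by metis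
  have r: "zadd p (zmul p t (zadd p y1 (zneg p x1))) (zadd p y2 (zneg p x2)) =
      zadd p (zadd p (zmul p t y1) y2) (zneg p (zadd p (zmul p t x1) x2))"
    by (rule zp_eqI; simp_all add: x y assms; (simp only: zlev mod_simps; simp add: algebra_simps x y assms))
  show ?thesis unfolding x y Mset_def hh_def
    by (simp add: x y assms r dv_sub_iff)
qed

lemma lat_index_Mset: assumes "t \<in> Zp p" shows "lat_index p 3 (Mset p E1 E2 t) = p ^ (E1 + E2)"
proof -
  let ?h = "hh E1 E2 t"
  let ?G = "\<lambda>z. {y \<in> lat p 3. ?h y = z}"
  have cos: "(\<lambda>x. {y \<in> lat p 3. vadd p y (vneg p x) \<in> Mset p E1 E2 t}) ` lat p 3 = ?G ` (?h ` lat p 3)"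
  proof -
    have "{y \<in> lat p 3. vadd p y (vneg p x) \<in> Mset p E1 E2 t} = ?G (?h x)" if "x \<in> lat p 3" for x
      using coset_eq[OF assms that] by auto
    then show ?thesis by (auto simp: image_iff)
  qed
  have inj: "inj_on ?G (?h ` lat p 3)"
  proof (rule inj_onI)
    fix z1 z2 assume "z1 \<in> ?h ` lat p 3" "z2 \<in> ?h ` lat p 3" "?G z1 = ?G z2"
    then obtain x where "x \<in> lat p 3" "?h x = z1" by auto
    then have "x \<in> ?G z1" by simp
    then show "z1 = z2" using \<open>?G z1 = ?G z2\<close> \<open>?h x = z1\<close> by auto
  qed
  have img: "?h ` lat p 3 = {0..<int p ^ E1} \<times> {0..<int p ^ E2}"
  proof
    show "?h ` lat p 3 \<subseteq> {0..<int p ^ E1} \<times> {0..<int p ^ E2}"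
    proof
      fix z assume "z \<in> ?h ` lat p 3"
      then obtain v where v: "v \<in> lat p 3" "z = ?h v" by auto
      have "v 1 \<in> Zp p" "zadd p (zmul p t (v 1)) (v 2) \<in> Zp p" using lat3_Zp[OF v(1)] assms by auto
      then show "z \<in> {0..<int p ^ E1} \<times> {0..<int p ^ E2}" unfolding v hh_def using Zp_D by auto
    qed
  next
    show "{0..<int p ^ E1} \<times> {0..<int p ^ E2} \<subseteq> ?h ` lat p 3"
    proof
      fix z assume "z \<in> {0..<int p ^ E1} \<times> {0..<int p ^ E2}"
      then obtain a b where z: "z = (a, b)" "0 \<le> a" "a < int p ^ E1" "0 \<le> b" "b < int p ^ E2" by auto
      let ?v = "mkv3 zzero (zof_int p a) (zof_int p (b - t E2 * a))"
      have "?h ?v = (a, b)" unfolding hh_def using z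
        by (simp add: zlev mod_simps Zp_mod[OF assms] del: Zp_mod)
      moreover have "?v \<in> lat p 3" by simp
      ultimately show "z \<in> ?h ` lat p 3" unfolding z by (metis image_eqI)
    qed
  qed
  have "lat_index p 3 (Mset p E1 E2 t) = card (?G ` (?h ` lat p 3))" unfolding lat_index_def cos ..
  also have "\<dots> = card (?h ` lat p 3)" by (rule card_image[OF inj])
  also have "\<dots> = nat (int p ^ E1) * nat (int p ^ E2)" unfolding img by (simp add: card_cartesian_product)
  also have "\<dots> = p ^ (E1 + E2)" by (simp add: power_add nat_mult_distrib nat_power_eq)
  finally show ?thesis .
qed

end

context gl begin
lemma Mg_Mset: "Mg = Mset p E1 E2 t" unfolding Mg_def Mset_def ..

theorem gl_main: "self_similar_index p 3 (str3 p w1 w2) (p ^ (E1 + E2))"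
  unfolding self_similar_index_def
  using subalg_Mg hom_phi simple_phi lat_index_Mset[OF pars(1)] Mg_Mset by metis
end

context pp begin

lemma lin_10[simp]: "x \<in> Zp p \<Longrightarrow> y \<in> Zp p \<Longrightarrow> lin p (zof_int p 1) zzero x y = x"
  by (rule zp_eqI; simp_all add: lin_def; (simp only: zlev mod_simps; simp add: algebra_simps))
lemma lin_01[simp]: "x \<in> Zp p \<Longrightarrow> y \<in> Zp p \<Longrightarrow> lin p zzero (zof_int p 1) x y = y"
  by (rule zp_eqI; simp_all add: lin_def; (simp only: zlev mod_simps; simp add: algebra_simps))
lemma tt2_t0: "d1 \<in> Zp p \<Longrightarrow> d2 \<in> Zp p \<Longrightarrow> tt2 p E1 E2 zzero d1 d2 = zmul p (zpow p E2) d2"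
  by (rule zp_eqI; simp_all add: tt2_def tt1_def zsub_def; (simp only: zlev mod_simps; simp add: algebra_simps))
lemma one_one: "zmul p (zof_int p 1) (zof_int p 1) = zof_int p 1"
  by (rule zp_eqI; simp_all; (simp only: zlev mod_simps; simp add: algebra_simps))
lemma one_mul[simp]: "x \<in> Zp p \<Longrightarrow> zmul p (zof_int p 1) x = x"
  by (rule zp_eqI; simp_all; (simp only: zlev mod_simps; simp add: algebra_simps))

lemma dv_from: "d \<in> Zp p \<Longrightarrow> dv p r d \<Longrightarrow> X = zmul p (zpow p e) d \<Longrightarrow> dv p (r + e) X"
  using dv_pow_mul by simp

lemma case_even:
  assumes w: "w1 \<in> lat p 3" "w2 \<in> lat p 3" "w1 0 = zzero" "w2 0 = zzero"
  and HN: "w1 1 \<noteq> zzero \<or> w1 2 \<noteq> zzero \<or> w2 1 \<noteq> zzero \<or> w2 2 \<noteq> zzero"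
  and j: "1 \<le> j"
  shows "self_similar_index p 3 (str3 p w1 w2) (p ^ (j + j))"
proof -
  have wZ: "w1 1 \<in> Zp p" "w1 2 \<in> Zp p" "w2 1 \<in> Zp p" "w2 2 \<in> Zp p" "w1 (Suc 0) \<in> Zp p" "w2 (Suc 0) \<in> Zp p"
    using lat3_Zp w by auto
  have "gl p w1 w2 j j zzero (zof_int p 1) (zof_int p 1) zzero zzero (zof_int p 1)"
  proof (unfold_locales)
    fix d1 d2 assume d: "d1 \<in> Zp p" "d2 \<in> Zp p"
    let ?e1 = "lin p (w1 1) (w2 1) d1 d2" and ?e2 = "lin p (w1 2) (w2 2) d1 d2"
    show "\<exists>e1\<in>Zp p. \<exists>e2\<in>Zp p.
     lin p (w1 1) (w2 1) (tt1 p j d1) (tt2 p j j zzero d1 d2) = tt1 p j e1 \<and>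
     lin p (w1 2) (w2 2) (tt1 p j d1) (tt2 p j j zzero d1 d2) = tt2 p j j zzero e1 e2 \<and>
     lin p (zof_int p 1) zzero e1 e2 = zmul p (zof_int p 1) (lin p (w1 1) (w2 1) (lin p (zof_int p 1) zzero d1 d2) (lin p zzero (zof_int p 1) d1 d2)) \<and>
     lin p zzero (zof_int p 1) e1 e2 = zmul p (zof_int p 1) (lin p (w1 2) (w2 2) (lin p (zof_int p 1) zzero d1 d2) (lin p zzero (zof_int p 1) d1 d2))"
      apply (rule bexI[of _ ?e1], rule bexI[of _ ?e2])
      apply (simp_all add: d wZ tt2_t0)
      by (intro conjI; rule zp_eqI; simp_all add: d wZ lin_def tt1_def;
        (simp only: zlev mod_simps; simp add: algebra_simps d wZ))
  next
    fix d1 d2 d1' d2' r assume d: "d1 \<in> Zp p" "d2 \<in> Zp p" "d1' \<in> Zp p" "d2' \<in> Zp p"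
      and e: "tt1 p j d1' = lin p (zof_int p 1) zzero d1 d2" "tt2 p j j zzero d1' d2' = lin p zzero (zof_int p 1) d1 d2"
      and r: "dv p r (lin p (zof_int p 1) zzero d1' d2')" "dv p r (lin p zzero (zof_int p 1) d1' d2')"
    have e': "d1 = zmul p (zpow p j) d1'" "d2 = zmul p (zpow p j) d2'" using e d by (simp_all add: tt1_def tt2_t0)
    have "dv p (r + j) d1" "dv p (r + j) d2" using dv_from e' r d by simp_all
    then have "dv p (r + j + j) (tt1 p j d1)" "dv p (r + j + j) (tt2 p j j zzero d1 d2)"
      using dv_from d by (simp_all add: tt1_def tt2_t0)
    then show "dv p (Suc r) (tt1 p j d1) \<and> dv p (Suc r) (tt2 p j j zzero d1 d2)"
      using dv_mono[of _ "r + j + j" "Suc r"] j d by simp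
  qed (use HN in \<open>simp_all add: w prime_p one_one\<close>)
  then show ?thesis by (rule gl.gl_main)
qed

end

context pp begin

lemma zpow_nz: "zpow p s \<noteq> zzero"
proof
  assume "zpow p s = zzero"
  then have "zpow p s (Suc s) = 0" unfolding zzero_def by simp
  moreover have "zpow p s (Suc s) = int p ^ s" unfolding zlev using p1 by simp
  ultimately show False using p1 by simp
qed

lemma dv_powI: assumes "d \<in> Zp p" "dv p r d" "n \<le> r + e" shows "dv p n (zmul p (zpow p e) d)"
  using dv_mono[OF _ dv_pow_mul[OF assms(1,2)] assms(3)] assms(1) by simp

lemma case_L6odd:
  assumes a: "a \<in> Zp p" "a \<noteq> zzero"
  shows "self_similar_index p 3 (L6 p a) (p ^ (Suc j + j))"
proof -
  let ?w1 = "mkv3 zzero a zzero" and ?w2 = "mkv3 zzero zzero a" and ?o = "zof_int p 1"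
  have "gl p ?w1 ?w2 (Suc j) j zzero ?o zzero ?o ?o zzero"
  proof (unfold_locales)
    fix d1 d2 assume d: "d1 \<in> Zp p" "d2 \<in> Zp p"
    show "\<exists>e1\<in>Zp p. \<exists>e2\<in>Zp p.
     lin p (?w1 1) (?w2 1) (tt1 p (Suc j) d1) (tt2 p (Suc j) j zzero d1 d2) = tt1 p (Suc j) e1 \<and>
     lin p (?w1 2) (?w2 2) (tt1 p (Suc j) d1) (tt2 p (Suc j) j zzero d1 d2) = tt2 p (Suc j) j zzero e1 e2 \<and>
     lin p zzero ?o e1 e2 = zmul p ?o (lin p (?w1 1) (?w2 1) (lin p zzero ?o d1 d2) (lin p ?o zzero d1 d2)) \<and>
     lin p ?o zzero e1 e2 = zmul p ?o (lin p (?w1 2) (?w2 2) (lin p zzero ?o d1 d2) (lin p ?o zzero d1 d2))"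
      apply (rule bexI[of _ "zmul p a d1"], rule bexI[of _ "zmul p a d2"])
      apply (simp_all add: d a tt2_t0)
      by (intro conjI; rule zp_eqI; simp_all add: d a lin_def tt1_def;
        (simp only: zlev mod_simps; simp add: algebra_simps d a))
  next
    fix d1 d2 d1' d2' r assume d: "d1 \<in> Zp p" "d2 \<in> Zp p" "d1' \<in> Zp p" "d2' \<in> Zp p"
      and e: "tt1 p (Suc j) d1' = lin p zzero ?o d1 d2" "tt2 p (Suc j) j zzero d1' d2' = lin p ?o zzero d1 d2"
      and r: "dv p r (lin p zzero ?o d1' d2')" "dv p r (lin p ?o zzero d1' d2')"
    have e': "d2 = zmul p (zpow p (Suc j)) d1'" "d1 = zmul p (zpow p j) d2'" using e d by (simp_all add: tt1_def tt2_t0)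
    have r': "dv p r d1'" "dv p r d2'" using r d by simp_all
    have d2r: "dv p (Suc (r + j)) d2" unfolding e'(1) by (rule dv_powI[OF d(3) r'(1)]) simp
    have d1r: "dv p (r + j) d1" unfolding e'(2) by (rule dv_powI[OF d(4) r'(2)]) simp
    have "dv p (Suc r) (tt1 p (Suc j) d1)" unfolding tt1_def by (rule dv_powI[OF d(1) d1r]) simp
    moreover have "dv p (Suc r) (tt2 p (Suc j) j zzero d1 d2)" unfolding tt2_t0[OF d(1,2)]
      by (rule dv_powI[OF d(2) d2r]) simp
    ultimately show "dv p (Suc r) (tt1 p (Suc j) d1) \<and> dv p (Suc r) (tt2 p (Suc j) j zzero d1 d2)" ..
  qed (use a in \<open>simp_all add: prime_p one_one\<close>)
  then show ?thesis unfolding L6_def by (rule gl.gl_main)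
qed

lemma case_L2odd:
  assumes c: "c \<in> Zp p" "zval p c = 1"
  shows "self_similar_index p 3 (L2 p s r c) (p ^ (j + Suc j))"
proof -
  have c1: "dv p 1 c" "\<not> dv p 2 c" using zval_1[OF c] by auto
  define c' where "c' = zdiv p 1 c"
  have cu: "zunit p c'" unfolding c'_def using zdiv_unit[OF c(1) c1(1)] c1(2) by (simp add: numeral_2_eq_2)
  have cz: "c' \<in> Zp p" using cu zunit_Zp by blast
  have ceq: "c = zmul p (zpow p 1) c'" unfolding c'_def using zpow_zdiv[OF c(1) c1(1)] by simp
  let ?P = "zpow p s" and ?Q = "zpow p (s + r)" and ?o = "zof_int p 1"
  let ?w1 = "mkv3 zzero ?P (zmul p ?Q c)" and ?w2 = "mkv3 zzero ?Q ?P"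
  have "gl p ?w1 ?w2 j (Suc j) zzero ?o zzero ?o c' zzero"
  proof (unfold_locales)
    fix d1 d2 assume d: "d1 \<in> Zp p" "d2 \<in> Zp p"
    show "\<exists>e1\<in>Zp p. \<exists>e2\<in>Zp p.
     lin p (?w1 1) (?w2 1) (tt1 p j d1) (tt2 p j (Suc j) zzero d1 d2) = tt1 p j e1 \<and>
     lin p (?w1 2) (?w2 2) (tt1 p j d1) (tt2 p j (Suc j) zzero d1 d2) = tt2 p j (Suc j) zzero e1 e2 \<and>
     lin p zzero ?o e1 e2 = zmul p ?o (lin p (?w1 1) (?w2 1) (lin p zzero ?o d1 d2) (lin p c' zzero d1 d2)) \<and>
     lin p c' zzero e1 e2 = zmul p ?o (lin p (?w1 2) (?w2 2) (lin p zzero ?o d1 d2) (lin p c' zzero d1 d2))"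
      apply (rule bexI[of _ "lin p ?P (zmul p ?Q (zpow p 1)) d1 d2"], rule bexI[of _ "lin p (zmul p ?Q c') ?P d1 d2"])
      apply (simp_all add: d c cz tt2_t0)
      unfolding ceq
      by (intro conjI; rule zp_eqI; simp_all add: d cz lin_def tt1_def;
        (simp only: zlev mod_simps; simp add: algebra_simps power_add d cz))
  next
    fix d1 d2 d1' d2' r assume d: "d1 \<in> Zp p" "d2 \<in> Zp p" "d1' \<in> Zp p" "d2' \<in> Zp p"
      and e: "tt1 p j d1' = lin p zzero ?o d1 d2" "tt2 p j (Suc j) zzero d1' d2' = lin p c' zzero d1 d2"
      and r: "dv p r (lin p zzero ?o d1' d2')" "dv p r (lin p c' zzero d1' d2')"
    have lc: "lin p c' zzero x y = zmul p c' x" if "x \<in> Zp p" "y \<in> Zp p" for x y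
      by (rule zp_eqI; simp_all add: that cz lin_def; (simp only: zlev mod_simps; simp add: algebra_simps))
    have e': "d2 = zmul p (zpow p j) d1'" "zmul p c' d1 = zmul p (zpow p (Suc j)) d2'" using e d by (simp_all add: tt1_def tt2_t0 lc)
    have r': "dv p r d2'" "dv p r d1'" using r d dv_unit[OF cu] by (simp_all add: lc)
    have d2r: "dv p (r + j) d2" unfolding e'(1) by (rule dv_powI[OF d(3) r'(2)]) simp
    have "dv p (Suc (r + j)) (zmul p c' d1)" unfolding e'(2) by (rule dv_powI[OF d(4) r'(1)]) simp
    then have d1r: "dv p (Suc (r + j)) d1" using dv_unit[OF cu] d by simp
    have "dv p (Suc r) (tt1 p j d1)" unfolding tt1_def by (rule dv_powI[OF d(1) d1r]) simp
    moreover have "dv p (Suc r) (tt2 p j (Suc j) zzero d1 d2)" unfolding tt2_t0[OF d(1,2)]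
      by (rule dv_powI[OF d(2) d2r]) simp
    ultimately show "dv p (Suc r) (tt1 p j d1) \<and> dv p (Suc r) (tt2 p j (Suc j) zzero d1 d2)" ..
  qed (use c cz zpow_nz in \<open>simp_all add: prime_p one_one\<close>)
  then show ?thesis unfolding L2_def by (rule gl.gl_main)
qed

end

context pp begin

lemma dv_sub: "dv p e x \<Longrightarrow> dv p e y \<Longrightarrow> dv p e (zsub p x y)"
  unfolding zsub_def by (intro dv_add dv_neg)

lemma case_L7i:
  assumes a: "a \<in> Zp p" "zval p a \<ge> 1" and c: "c \<in> Zp p" "zval p c = 1"
  shows "self_similar_index p 3 (L7 p s a c) (p ^ (j + Suc j))"
proof -
  have c1: "dv p 1 c" "\<not> dv p 2 c" using zval_1[OF c] by auto
  have a1: "dv p 1 a" using zval_ge1[OF a] .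
  define c' where "c' = zdiv p 1 c"
  define a' where "a' = zdiv p 1 a"
  have cu: "zunit p c'" unfolding c'_def using zdiv_unit[OF c(1) c1(1)] c1(2) by (simp add: numeral_2_eq_2)
  have cz: "c' \<in> Zp p" using cu zunit_Zp by blast
  have az: "a' \<in> Zp p" unfolding a'_def using a a1 by simp
  have ceq: "c = zmul p (zpow p 1) c'" unfolding c'_def using zpow_zdiv[OF c(1) c1(1)] by simp
  have aeq: "a = zmul p (zpow p 1) a'" unfolding a'_def using zpow_zdiv[OF a(1) a1] by simp
  let ?P = "zpow p s" and ?o = "zof_int p 1"
  let ?w1 = "mkv3 zzero (zmul p ?P a) (zmul p ?P c)" and ?w2 = "mkv3 zzero ?P zzero"
  have "gl p ?w1 ?w2 j (Suc j) zzero ?o a' ?o c' zzero"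
  proof (unfold_locales)
    fix d1 d2 assume d: "d1 \<in> Zp p" "d2 \<in> Zp p"
    show "\<exists>e1\<in>Zp p. \<exists>e2\<in>Zp p.
     lin p (?w1 1) (?w2 1) (tt1 p j d1) (tt2 p j (Suc j) zzero d1 d2) = tt1 p j e1 \<and>
     lin p (?w1 2) (?w2 2) (tt1 p j d1) (tt2 p j (Suc j) zzero d1 d2) = tt2 p j (Suc j) zzero e1 e2 \<and>
     lin p a' ?o e1 e2 = zmul p ?o (lin p (?w1 1) (?w2 1) (lin p a' ?o d1 d2) (lin p c' zzero d1 d2)) \<and>
     lin p c' zzero e1 e2 = zmul p ?o (lin p (?w1 2) (?w2 2) (lin p a' ?o d1 d2) (lin p c' zzero d1 d2))"
      apply (rule bexI[of _ "zmul p (zmul p ?P (zpow p 1)) (lin p a' ?o d1 d2)"], rule bexI[of _ "zmul p (zmul p ?P c') d1"])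
      apply (simp_all add: d a c cz az tt2_t0)
      unfolding ceq aeq
      by (intro conjI; rule zp_eqI; simp_all add: d cz az lin_def tt1_def;
        (simp only: zlev mod_simps; simp add: algebra_simps power_add d cz az))
  next
    fix d1 d2 d1' d2' r assume d: "d1 \<in> Zp p" "d2 \<in> Zp p" "d1' \<in> Zp p" "d2' \<in> Zp p"
      and e: "tt1 p j d1' = lin p a' ?o d1 d2" "tt2 p j (Suc j) zzero d1' d2' = lin p c' zzero d1 d2"
      and r: "dv p r (lin p a' ?o d1' d2')" "dv p r (lin p c' zzero d1' d2')"
    have lc: "lin p c' zzero x y = zmul p c' x" if "x \<in> Zp p" "y \<in> Zp p" for x y
      by (rule zp_eqI; simp_all add: that cz lin_def; (simp only: zlev mod_simps; simp add: algebra_simps))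
    have ls: "y = zsub p (lin p a' ?o x y) (zmul p a' x)" if "x \<in> Zp p" "y \<in> Zp p" for x y
      by (rule zp_eqI; simp_all add: that az lin_def zsub_def; (simp only: zlev mod_simps; simp add: algebra_simps that))
    have r1: "dv p r d1'" using r(2) d dv_unit[OF cu] by (simp add: lc)
    have r2: "dv p r d2'" by (subst ls[OF d(3,4)]) (intro dv_sub r(1) dv_mul r1)
    have e2: "zmul p c' d1 = zmul p (zpow p (Suc j)) d2'" using e(2) d by (simp add: tt2_t0 lc)
    have "dv p (Suc (r + j)) (zmul p c' d1)" unfolding e2 by (rule dv_powI[OF d(4) r2]) simp
    then have d1r: "dv p (Suc (r + j)) d1" using dv_unit[OF cu] d by simp
    have "dv p (r + j) d2"
    proof (subst ls[OF d(1,2)], rule dv_sub)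
      show "dv p (r + j) (lin p a' ?o d1 d2)" unfolding e(1)[symmetric] tt1_def by (rule dv_powI[OF d(3) r1]) simp
      show "dv p (r + j) (zmul p a' d1)" by (rule dv_mul, rule dv_mono[OF d(1) d1r]) simp
    qed
    then have d2r: "dv p (r + j) d2" .
    have "dv p (Suc r) (tt1 p j d1)" unfolding tt1_def by (rule dv_powI[OF d(1) d1r]) simp
    moreover have "dv p (Suc r) (tt2 p j (Suc j) zzero d1 d2)" unfolding tt2_t0[OF d(1,2)]
      by (rule dv_powI[OF d(2) d2r]) simp
    ultimately show "dv p (Suc r) (tt1 p j d1) \<and> dv p (Suc r) (tt2 p j (Suc j) zzero d1 d2)" ..
  qed (use a c cz az zpow_nz in \<open>simp_all add: prime_p one_one\<close>)
  then show ?thesis unfolding L7_def by (rule gl.gl_main)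
qed

end

context pp begin

lemma two_unit: assumes "p \<noteq> 2" shows "zunit p (zof_int p 2)"
proof -
  have "p \<ge> 3" using assms p1 by simp
  then have "(2::int) mod int p = 2" by simp
  then show ?thesis unfolding zunit_def using p1 by (simp add: zlev)
qed

lemma four_unit: assumes "p \<noteq> 2" shows "zunit p (zof_int p 4)"
proof -
  have "zmul p (zof_int p 2) (zof_int p 2) = zof_int p 4"
    by (rule zp_eqI; simp_all; (simp only: zlev mod_simps; simp add: algebra_simps))
  then show ?thesis using zunit_mul[OF two_unit[OF assms] two_unit[OF assms]] by simp
qed

lemma neg_one_sq: "zmul p (zof_int p (-1)) (zof_int p (-1)) = zof_int p 1"
  by (rule zp_eqI; simp_all; (simp only: zlev mod_simps; simp add: algebra_simps))

lemma case_L701: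
  assumes p3: "p \<ge> 3"
  shows "self_similar_index p 3 (L7 p s zzero (zof_int p 1)) (p ^ (j + Suc j))"
proof -
  have p2: "p \<noteq> 2" using p3 by simp
  let ?P = "zpow p s" and ?o = "zof_int p 1" and ?sg = "zof_int p (-1)"
  let ?m11 = "zof_int p 2" and ?m12 = "zof_int p (1 - int p)" and ?m21 = "zof_int p 2" and ?m22 = "zof_int p (- (1 + int p))"
  let ?w1 = "mkv3 zzero (zmul p ?P zzero) (zmul p ?P ?o)" and ?w2 = "mkv3 zzero ?P zzero"
  have "gl p ?w1 ?w2 j (Suc j) ?o ?sg ?m11 ?m12 ?m21 ?m22"
  proof (unfold_locales)
    fix d1 d2 assume d: "d1 \<in> Zp p" "d2 \<in> Zp p"
    show "\<exists>e1\<in>Zp p. \<exists>e2\<in>Zp p.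
     lin p (?w1 1) (?w2 1) (tt1 p j d1) (tt2 p j (Suc j) ?o d1 d2) = tt1 p j e1 \<and>
     lin p (?w1 2) (?w2 2) (tt1 p j d1) (tt2 p j (Suc j) ?o d1 d2) = tt2 p j (Suc j) ?o e1 e2 \<and>
     lin p ?m11 ?m12 e1 e2 = zmul p ?sg (lin p (?w1 1) (?w2 1) (lin p ?m11 ?m12 d1 d2) (lin p ?m21 ?m22 d1 d2)) \<and>
     lin p ?m21 ?m22 e1 e2 = zmul p ?sg (lin p (?w1 2) (?w2 2) (lin p ?m11 ?m12 d1 d2) (lin p ?m21 ?m22 d1 d2))"
      apply (rule bexI[of _ "zmul p ?P (zsub p (zmul p (zpow p 1) d2) d1)"], rule bexI[of _ "zmul p ?P d2"])
      apply (simp_all add: d)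
      by (intro conjI; rule zp_eqI; simp_all add: d lin_def tt1_def tt2_def zsub_def;
        (simp only: zlev mod_simps; simp add: algebra_simps power_add d))
  next
    fix d1 d2 d1' d2' r assume d: "d1 \<in> Zp p" "d2 \<in> Zp p" "d1' \<in> Zp p" "d2' \<in> Zp p"
      and e: "tt1 p j d1' = lin p ?m11 ?m12 d1 d2" "tt2 p j (Suc j) ?o d1' d2' = lin p ?m21 ?m22 d1 d2"
      and r: "dv p r (lin p ?m11 ?m12 d1' d2')" "dv p r (lin p ?m21 ?m22 d1' d2')"
    have i1: "zmul p (zof_int p 2) d2' = zsub p (lin p ?m11 ?m12 d1' d2') (lin p ?m21 ?m22 d1' d2')"
      by (rule zp_eqI; simp_all add: d lin_def zsub_def; (simp only: zlev mod_simps; simp add: algebra_simps d))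
    have r2: "dv p r d2'" using dv_unit[OF two_unit[OF p2] d(4)] dv_sub[OF r] unfolding i1 by simp
    have i2: "zmul p (zof_int p 2) d1' = zsub p (lin p ?m11 ?m12 d1' d2') (zmul p ?m12 d2')"
      by (rule zp_eqI; simp_all add: d lin_def zsub_def; (simp only: zlev mod_simps; simp add: algebra_simps d))
    have r1: "dv p r d1'" using dv_unit[OF two_unit[OF p2] d(3)] dv_sub[OF r(1) dv_mul[OF r2]] unfolding i2 by simp
    have X: "dv p (r + j) (lin p ?m11 ?m12 d1 d2)" unfolding e(1)[symmetric] tt1_def by (rule dv_powI[OF d(3) r1]) simp
    have Yeq: "zmul p (zpow p (Suc j)) d2' = zadd p (lin p ?m21 ?m22 d1 d2) (lin p ?m11 ?m12 d1 d2)"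
    proof -
      have "zmul p (zpow p (Suc j)) d2' = zadd p (tt2 p j (Suc j) ?o d1' d2') (tt1 p j d1')"
        by (rule zp_eqI; simp_all add: d tt2_def tt1_def zsub_def; (simp only: zlev mod_simps; simp add: algebra_simps d))
      then show ?thesis unfolding e .
    qed
    have Y: "dv p (Suc (r + j)) (zadd p (lin p ?m21 ?m22 d1 d2) (lin p ?m11 ?m12 d1 d2))"
      unfolding Yeq[symmetric] by (rule dv_powI[OF d(4) r2]) simp
    have i3: "zmul p (zof_int p 2) d2 = zsub p (zmul p (zof_int p 2) (lin p ?m11 ?m12 d1 d2)) (zadd p (lin p ?m21 ?m22 d1 d2) (lin p ?m11 ?m12 d1 d2))"
      by (rule zp_eqI; simp_all add: d lin_def zsub_def; (simp only: zlev mod_simps; simp add: algebra_simps d))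
    have d2r: "dv p (r + j) d2"
      using dv_unit[OF two_unit[OF p2] d(2)] dv_sub[OF dv_mul[OF X] dv_mono[OF _ Y]] d unfolding i3 by simp
    have i4: "zmul p (zof_int p 4) d1 = zadd p (zadd p (lin p ?m21 ?m22 d1 d2) (lin p ?m11 ?m12 d1 d2)) (zmul p (zpow p 1) (zmul p (zof_int p 2) d2))"
      by (rule zp_eqI; simp_all add: d lin_def zsub_def; (simp only: zlev mod_simps; simp add: algebra_simps d))
    have "dv p (Suc (r + j)) (zmul p (zpow p 1) (zmul p (zof_int p 2) d2))"
      by (rule dv_powI[OF _ dv_mul[OF d2r]]) (simp_all add: d)
    then have d1r: "dv p (Suc (r + j)) d1"
      using dv_unit[OF four_unit[OF p2] d(1)] dv_add[OF Y] unfolding i4 by simp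
    have t1: "dv p (Suc r) (tt1 p j d1)" unfolding tt1_def by (rule dv_powI[OF d(1) d1r]) simp
    have "dv p (Suc r) (tt2 p j (Suc j) ?o d1 d2)" unfolding tt2_def
      by (rule dv_sub, rule dv_powI[OF d(2) d2r], simp, simp add: d t1)
    with t1 show "dv p (Suc r) (tt1 p j d1) \<and> dv p (Suc r) (tt2 p j (Suc j) ?o d1 d2)" ..
  qed (use zpow_nz in \<open>simp_all add: prime_p neg_one_sq\<close>)
  then show ?thesis unfolding L7_def by (rule gl.gl_main)
qed

end

definition zhalf :: "nat \<Rightarrow> zp" where "zhalf p = (\<lambda>m. ((int p ^ m + 1) div 2) mod int p ^ m)"

context pp begin

lemma p_odd: assumes "p \<noteq> 2" shows "odd p"
proof -
  have "2 < p" using assms p1 by simp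
  then show ?thesis by (rule prime_odd_nat[OF prime_p])
qed

lemma zhalf: assumes "p \<noteq> 2" shows "zhalf p \<in> Zp p" "zmul p (zof_int p 2) (zhalf p) = zof_int p 1"
proof -
  have op: "odd p" by (rule p_odd[OF assms])
  have od: "odd (int p ^ m)" for m using op by simp
  have X2: "2 * ((int p ^ m + 1) div 2) = int p ^ m + 1" for m
  proof -
    have "even (int p ^ m + 1)" using od[of m] by simp
    then show ?thesis by (rule even_two_times_div_two)
  qed
  have "even (int p - 1)" using op by simp
  then obtain q where q: "int p - 1 = 2 * q" by (rule evenE)
  show "zhalf p \<in> Zp p" unfolding zhalf_def
  proof (rule Zp_I[where X="\<lambda>m. (int p ^ m + 1) div 2"])
    fix m
    have "2 * ((int p ^ Suc m + 1) div 2 - (int p ^ m + 1) div 2) = int p ^ m * (int p - 1)"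
      using X2[of m] X2[of "Suc m"] by (simp add: algebra_simps)
    then have "(int p ^ Suc m + 1) div 2 - (int p ^ m + 1) div 2 = int p ^ m * q" unfolding q by simp
    then show "(int p ^ Suc m + 1) div 2 mod int p ^ m = (int p ^ m + 1) div 2 mod int p ^ m"
      by (simp add: mod_eq_dvd_iff)
  qed simp
  show "zmul p (zof_int p 2) (zhalf p) = zof_int p 1"
  proof (rule ext)
    fix m
    show "zmul p (zof_int p 2) (zhalf p) m = zof_int p 1 m"
      unfolding zlev zhalf_def by (simp add: mod_simps X2)
  qed
qed

lemma case_L7ii:
  assumes a: "a \<in> Zp p" "zval p a = 0" and c: "c \<in> Zp p"
  and D: "zval p (zadd p (zmul p (zof_int p 4) c) (zmul p a a)) = 1"
  shows "self_similar_index p 3 (L7 p s a c) (p ^ (j + Suc j))"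
proof -
  let ?D = "zadd p (zmul p (zof_int p 4) c) (zmul p a a)"
  have au: "zunit p a" by (rule zval_0[OF a])
  have D1: "dv p 1 ?D" "\<not> dv p 2 ?D" using zval_1[OF _ D] a c by auto
  have p2: "p \<noteq> 2"
  proof
    assume "p = 2"
    have "a 1 \<noteq> 0" "0 \<le> a 1" "a 1 < int p" using au Zp_D[OF a(1), of 1] unfolding zunit_def by auto
    then have a11: "a 1 = 1" using \<open>p = 2\<close> by simp
    have "?D 1 = 1" unfolding zlev using a11 \<open>p = 2\<close> by (simp add: mod_simps)
    then show False using D1(1) unfolding dv_def by simp
  qed
  define h where "h = zhalf p"
  have hz: "h \<in> Zp p" and h2: "zmul p (zof_int p 2) h = zof_int p 1" unfolding h_def using zhalf[OF p2] by auto
  define tq where "tq = zmul p a h"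
  have tz: "tq \<in> Zp p" unfolding tq_def using a hz by simp
  have aeq: "a = zadd p tq tq"
  proof -
    have "zadd p tq tq = zmul p a (zmul p (zof_int p 2) h)" unfolding tq_def
      by (rule zp_eqI; simp_all add: a hz; (simp only: zlev mod_simps; simp add: algebra_simps))
    then show ?thesis unfolding h2 using a by (simp add: zp_eqI zlev mod_simps)
  qed
  define g where "g = zadd p (zmul p tq tq) c"
  have gz: "g \<in> Zp p" unfolding g_def using tz c by simp
  have g4: "zmul p (zof_int p 4) g = ?D"
  proof -
    have "zmul p (zof_int p 4) g = zadd p ?D (zmul p (zmul p a a) (zmul p (zsub p (zmul p (zof_int p 2) h) (zof_int p 1)) (zadd p (zmul p (zof_int p 2) h) (zof_int p 1))))"
      unfolding g_def tq_def
      by (rule zp_eqI; simp_all add: a c hz zsub_def; (simp only: zlev mod_simps; simp add: algebra_simps))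
    also have "\<dots> = ?D" unfolding h2
      by (rule zp_eqI; simp_all add: a c zsub_def; (simp only: zlev mod_simps; simp add: algebra_simps))
    finally show ?thesis .
  qed
  have g1: "dv p 1 g" using dv_unit[OF four_unit[OF p2] gz] D1(1) g4 by simp
  have g2: "\<not> dv p 2 g" using D1(2) dv_mul[of 2 g "zof_int p 4"] g4 by auto
  define g' where "g' = zdiv p 1 g"
  have gu: "zunit p g'" unfolding g'_def using zdiv_unit[OF gz g1] g2 by (simp add: numeral_2_eq_2)
  have g'z: "g' \<in> Zp p" using gu zunit_Zp by blast
  have ceq: "c = zsub p (zmul p (zpow p 1) g') (zmul p tq tq)"
  proof -
    have gg: "zmul p (zpow p 1) g' = g" unfolding g'_def by (rule zpow_zdiv[OF gz g1])
    have "c = zsub p g (zmul p tq tq)" unfolding g_def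
      by (rule zp_eqI; simp_all add: c tz zsub_def; (simp only: zlev mod_simps; simp add: algebra_simps c))
    then show ?thesis using gg by simp
  qed
  let ?P = "zpow p s" and ?o = "zof_int p 1"
  let ?w1 = "mkv3 zzero (zmul p ?P a) (zmul p ?P c)" and ?w2 = "mkv3 zzero ?P zzero"
  have "gl p ?w1 ?w2 j (Suc j) tq ?o zzero ?o g' (zneg p tq)"
  proof (unfold_locales)
    fix d1 d2 assume d: "d1 \<in> Zp p" "d2 \<in> Zp p"
    show "\<exists>e1\<in>Zp p. \<exists>e2\<in>Zp p.
     lin p (?w1 1) (?w2 1) (tt1 p j d1) (tt2 p j (Suc j) tq d1 d2) = tt1 p j e1 \<and>
     lin p (?w1 2) (?w2 2) (tt1 p j d1) (tt2 p j (Suc j) tq d1 d2) = tt2 p j (Suc j) tq e1 e2 \<and>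
     lin p zzero ?o e1 e2 = zmul p ?o (lin p (?w1 1) (?w2 1) (lin p zzero ?o d1 d2) (lin p g' (zneg p tq) d1 d2)) \<and>
     lin p g' (zneg p tq) e1 e2 = zmul p ?o (lin p (?w1 2) (?w2 2) (lin p zzero ?o d1 d2) (lin p g' (zneg p tq) d1 d2))"
      apply (rule bexI[of _ "zmul p ?P (zadd p (zmul p tq d1) (zmul p (zpow p 1) d2))"],
             rule bexI[of _ "zmul p ?P (zadd p (zmul p g' d1) (zmul p tq d2))"])
      apply (simp_all add: d a c tz g'z)
      unfolding ceq aeq
      by (intro conjI; rule zp_eqI; simp_all add: d tz g'z lin_def tt1_def tt2_def zsub_def;
        (simp only: zlev mod_simps; simp add: algebra_simps power_add d tz g'z))
  next
    fix d1 d2 d1' d2' r assume d: "d1 \<in> Zp p" "d2 \<in> Zp p" "d1' \<in> Zp p" "d2' \<in> Zp p"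
      and e: "tt1 p j d1' = lin p zzero ?o d1 d2" "tt2 p j (Suc j) tq d1' d2' = lin p g' (zneg p tq) d1 d2"
      and r: "dv p r (lin p zzero ?o d1' d2')" "dv p r (lin p g' (zneg p tq) d1' d2')"
    have r2: "dv p r d2'" using r d by simp
    have i1: "zmul p g' d1' = zadd p (lin p g' (zneg p tq) d1' d2') (zmul p tq d2')"
      by (rule zp_eqI; simp_all add: d tz g'z lin_def; (simp only: zlev mod_simps; simp add: algebra_simps d))
    have r1: "dv p r d1'" using dv_unit[OF gu d(3)] dv_add[OF r(2) dv_mul[OF r2]] unfolding i1 by simp
    have e1: "d2 = zmul p (zpow p j) d1'" using e(1) d by (simp add: tt1_def)
    have d2r: "dv p (r + j) d2" unfolding e1 by (rule dv_powI[OF d(3) r1]) simp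
    have e2: "zmul p g' d1 = zmul p (zpow p (Suc j)) d2'"
    proof -
      have "zmul p (zpow p (Suc j)) d2' = zadd p (tt2 p j (Suc j) tq d1' d2') (zmul p tq (tt1 p j d1'))"
        by (rule zp_eqI; simp_all add: d tz tt2_def tt1_def zsub_def; (simp only: zlev mod_simps; simp add: algebra_simps d))
      also have "\<dots> = zmul p g' d1" unfolding e
        by (rule zp_eqI; simp_all add: d tz g'z lin_def; (simp only: zlev mod_simps; simp add: algebra_simps d))
      finally show ?thesis by simp
    qed
    have "dv p (Suc (r + j)) (zmul p g' d1)" unfolding e2 by (rule dv_powI[OF d(4) r2]) simp
    then have d1r: "dv p (Suc (r + j)) d1" using dv_unit[OF gu] d by simp
    have t1: "dv p (Suc r) (tt1 p j d1)" unfolding tt1_def by (rule dv_powI[OF d(1) d1r]) simp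
    have "dv p (Suc r) (tt2 p j (Suc j) tq d1 d2)" unfolding tt2_def
      by (rule dv_sub, rule dv_powI[OF d(2) d2r], simp, rule dv_mul[OF t1])
    with t1 show "dv p (Suc r) (tt1 p j d1) \<and> dv p (Suc r) (tt2 p j (Suc j) tq d1 d2)" ..
  qed (use a c tz g'z zpow_nz in \<open>simp_all add: prime_p one_one\<close>)
  then show ?thesis unfolding L7_def by (rule gl.gl_main)
qed

end

context pp begin

lemma zdiv_add: assumes "x \<in> Zp p" "y \<in> Zp p" "dv p e x" "dv p e y"
  shows "zdiv p e (zadd p x y) = zadd p (zdiv p e x) (zdiv p e y)"
proof (rule zdiv_eqI)
  have "zmul p (zpow p e) (zadd p (zdiv p e x) (zdiv p e y)) =
     zadd p (zmul p (zpow p e) (zdiv p e x)) (zmul p (zpow p e) (zdiv p e y))"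
    by (rule zp_eqI; simp_all add: assms; (simp only: zlev mod_simps; simp add: algebra_simps))
  then show "zadd p x y = zmul p (zpow p e) (zadd p (zdiv p e x) (zdiv p e y))"
    using zpow_zdiv assms by simp
qed (use assms in simp)

lemma zdiv_smul: assumes "x \<in> Zp p" "a \<in> Zp p" "dv p e x"
  shows "zdiv p e (zmul p a x) = zmul p a (zdiv p e x)"
proof (rule zdiv_eqI)
  have "zmul p (zpow p e) (zmul p a (zdiv p e x)) = zmul p a (zmul p (zpow p e) (zdiv p e x))"
    by (rule zp_eqI; simp_all add: assms; (simp only: zlev mod_simps; simp add: algebra_simps))
  then show "zmul p a x = zmul p (zpow p e) (zmul p a (zdiv p e x))"
    using zpow_zdiv assms by simp
qed (use assms in simp)

lemma zdiv_zzero[simp]: "zdiv p e zzero = zzero"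
  by (rule zdiv_eqI) simp_all

definition "phiA k v = mkv3 (zdiv p k (v 2)) (v 0) (v 1)"

lemma MA: "v \<in> Mset p 0 k zzero \<longleftrightarrow> v \<in> lat p 3 \<and> dv p k (v 2)"
proof -
  have "v \<in> lat p 3 \<Longrightarrow> zadd p (zmul p zzero (v 1)) (v 2) = v 2"
    using lat3_Zp[of v] by (intro zp_eqI) (simp_all add: zlev)
  then show ?thesis unfolding Mset_def using lat3_Zp by auto
qed

lemma case_L6zero: assumes k: "1 \<le> k" shows "self_similar_index p 3 (L6 p zzero) (p ^ k)"
proof -
  let ?C = "L6 p zzero" and ?M = "Mset p 0 k zzero" and ?phi = "phiA k"
  have w: "mkv3 zzero zzero zzero \<in> lat p 3" by simp
  have brz: "br p 3 ?C u v = vzero" if uv: "u \<in> lat p 3" "v \<in> lat p 3" for u v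
  proof -
    obtain a b c where u: "u = mkv3 a b c" "a \<in> Zp p" "b \<in> Zp p" "c \<in> Zp p" using lat3_cases[OF uv(1)] by metis
    obtain a' b' c' where v: "v = mkv3 a' b' c'" "a' \<in> Zp p" "b' \<in> Zp p" "c' \<in> Zp p" using lat3_cases[OF uv(2)] by metis
    show ?thesis unfolding L6_def u v
      by (subst br_str3[OF w w]; simp add: u v brc_def vzero_mkv3)
  qed
  have sub: "subalg p 3 ?C ?M"
    unfolding subalg_def submod_def
  proof (intro conjI ballI)
    show "?M \<subseteq> lat p 3" using MA by auto
    show "vzero \<in> ?M" unfolding MA vzero_mkv3 by simp
  next
    fix u v assume "u \<in> ?M" "v \<in> ?M"
    then have u: "u \<in> lat p 3" "dv p k (u 2)" and v: "v \<in> lat p 3" "dv p k (v 2)" using MA by auto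
    show "br p 3 ?C u v \<in> ?M" using brz[OF u(1) v(1)] unfolding MA vzero_mkv3 by simp
    obtain a b c where uu: "u = mkv3 a b c" "a \<in> Zp p" "b \<in> Zp p" "c \<in> Zp p" using lat3_cases[OF u(1)] by metis
    obtain a' b' c' where vv: "v = mkv3 a' b' c'" "a' \<in> Zp p" "b' \<in> Zp p" "c' \<in> Zp p" using lat3_cases[OF v(1)] by metis
    show "vadd p u v \<in> ?M" unfolding MA using u v unfolding uu vv by (simp add: uu vv dv_add)
  next
    fix a u assume "a \<in> Zp p" "u \<in> ?M"
    then have u: "u \<in> lat p 3" "dv p k (u 2)" using MA by auto
    obtain a1 b c where uu: "u = mkv3 a1 b c" "a1 \<in> Zp p" "b \<in> Zp p" "c \<in> Zp p" using lat3_cases[OF u(1)] by metis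
    show "vsmul p a u \<in> ?M" unfolding MA using u \<open>a \<in> Zp p\<close> unfolding uu by (simp add: uu dv_mul)
  qed
  have phil: "?phi u \<in> lat p 3" if "u \<in> ?M" for u
    using that lat3_Zp unfolding MA phiA_def by simp
  have hom: "alg_hom_on p 3 ?C ?M ?phi"
    unfolding alg_hom_on_def
  proof (intro conjI ballI phil)
    fix u v assume "u \<in> ?M" "v \<in> ?M"
    then have u: "u \<in> lat p 3" "dv p k (u 2)" and v: "v \<in> lat p 3" "dv p k (v 2)" using MA by auto
    obtain a b c where uu: "u = mkv3 a b c" "a \<in> Zp p" "b \<in> Zp p" "c \<in> Zp p" using lat3_cases[OF u(1)] by metis
    obtain a' b' c' where vv: "v = mkv3 a' b' c'" "a' \<in> Zp p" "b' \<in> Zp p" "c' \<in> Zp p" using lat3_cases[OF v(1)] by metis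
    show "?phi (vadd p u v) = vadd p (?phi u) (?phi v)"
      unfolding uu vv phiA_def using u v uu vv by (simp add: zdiv_add)
    show "?phi (br p 3 ?C u v) = br p 3 ?C (?phi u) (?phi v)"
      unfolding brz[OF u(1) v(1)] using brz phil \<open>u \<in> ?M\<close> \<open>v \<in> ?M\<close>
      by (simp add: phiA_def vzero_mkv3)
  next
    fix s u assume "s \<in> Zp p" "u \<in> ?M"
    then have u: "u \<in> lat p 3" "dv p k (u 2)" using MA by auto
    obtain a b c where uu: "u = mkv3 a b c" "a \<in> Zp p" "b \<in> Zp p" "c \<in> Zp p" using lat3_cases[OF u(1)] by metis
    show "?phi (vsmul p s u) = vsmul p s (?phi u)"
      unfolding uu phiA_def using u uu \<open>s \<in> Zp p\<close> by (simp add: zdiv_smul)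
  qed
  have ind: "v \<in> vdom p 3 ?M ?phi (3 * n) \<Longrightarrow> dv p n (v 0) \<and> dv p n (v 1) \<and> dv p n (v 2)" for v n
  proof (induction n arbitrary: v)
    case 0 then show ?case using lat3_Zp by simp
  next
    case (Suc n)
    have e3: "3 * Suc n = Suc (Suc (Suc (3 * n)))" by simp
    have "v \<in> vdom p 3 ?M ?phi (Suc (Suc (Suc (3 * n))))" using Suc.prems unfolding e3 .
    then have vv: "v \<in> ?M" "?phi v \<in> ?M" "?phi (?phi v) \<in> ?M" "?phi (?phi (?phi v)) \<in> vdom p 3 ?M ?phi (3 * n)"
      unfolding vdom.simps(2) mem_Collect_eq by auto
    have v: "v \<in> lat p 3" "dv p k (v 2)" using vv(1) MA by auto
    have vz: "v 0 \<in> Zp p" "v 1 \<in> Zp p" "v 2 \<in> Zp p" using lat3_Zp[OF v(1)] by auto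
    have d1: "dv p k (v 1)" using vv(2) MA unfolding phiA_def by simp
    have d0: "dv p k (v 0)" using vv(3) MA unfolding phiA_def by simp
    have "?phi (?phi (?phi v)) = mkv3 (zdiv p k (v 0)) (zdiv p k (v 1)) (zdiv p k (v 2))"
      unfolding phiA_def by simp
    then have "dv p n (zdiv p k (v 0)) \<and> dv p n (zdiv p k (v 1)) \<and> dv p n (zdiv p k (v 2))"
      using Suc.IH[OF vv(4)] by simp
    then have "dv p (n + k) (v 0) \<and> dv p (n + k) (v 1) \<and> dv p (n + k) (v 2)"
      using dv_zdiv vz d0 d1 v(2) by blast
    then show ?case using dv_mono[of _ "n + k" "Suc n"] k vz by simp
  qed
  have simple: "simple_ve p 3 ?C ?M ?phi"
    unfolding simple_ve_def
  proof (intro allI impI)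
    fix I assume h: "lie_ideal p 3 ?C I \<and> invariant p 3 ?M ?phi I"
    have sub: "I \<subseteq> lat p 3" "vzero \<in> I" using h unfolding lie_ideal_def submod_def by auto
    have inv: "\<And>y j. y \<in> I \<Longrightarrow> y \<in> vdom p 3 ?M ?phi j" using h unfolding invariant_def by auto
    have "y = vzero" if y: "y \<in> I" for y
    proof -
      have yl: "y \<in> lat p 3" using y sub by auto
      have "\<And>n. dv p n (y 0) \<and> dv p n (y 1) \<and> dv p n (y 2)" using ind inv[OF y] by blast
      then have "y 0 = zzero" "y 1 = zzero" "y 2 = zzero" using dv_all lat3_Zp[OF yl] by auto
      then show ?thesis using lat3_eq[OF yl] by (simp add: vzero_mkv3)
    qed
    then show "I = {vzero}" using sub by auto
  qed
  have idx: "lat_index p 3 ?M = p ^ k" using lat_index_Mset[of zzero 0 k] by simp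
  show ?thesis unfolding self_similar_index_def using sub idx hom simple by blast
qed

end

lemma k_split: assumes "1 \<le> (k::nat)"
  obtains j where "1 \<le> j" "k = j + j" | j where "k = j + Suc j"
proof (cases "even k")
  case True then obtain j where "k = 2 * j" by (rule evenE)
  then show ?thesis using that(1)[of j] assms by simp
next
  case False then obtain j where "k = 2 * j + 1" by (rule oddE)
  then show ?thesis using that(2)[of j] by simp
qed

theorem lemma1p9:
  fixes p k :: nat
  assumes "prime p" and "k \<ge> 1"
  shows "(\<forall>a\<in>Zp p. self_similar_index p 3 (L6 p a) (p ^ k))
       \<and> (\<forall>s r c. c \<in> Zp p \<and> zval p c = 1 \<longrightarrow> self_similar_index p 3 (L2 p s r c) (p ^ k))
       \<and> (\<forall>s a c. a \<in> Zp p \<and> c \<in> Zp p \<and>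
            ((zval p c = 1 \<and> zval p a \<ge> 1) \<or>
             (zval p (zadd p (zmul p (zof_int p 4) c) (zmul p a a)) = 1 \<and> zval p a = 0 \<and> zval p c = 0))
            \<longrightarrow> self_similar_index p 3 (L7 p s a c) (p ^ k))
       \<and> (p \<ge> 3 \<longrightarrow> (\<forall>s. self_similar_index p 3 (L7 p s zzero (zof_int p 1)) (p ^ k)))"
proof -
  interpret pp p by (rule pp.intro) (rule assms(1))
  have EV: "self_similar_index p 3 (str3 p w1 w2) (p ^ k)"
    if "w1 \<in> lat p 3" "w2 \<in> lat p 3" "w1 0 = zzero" "w2 0 = zzero"
       "w1 1 \<noteq> zzero \<or> w1 2 \<noteq> zzero \<or> w2 1 \<noteq> zzero \<or> w2 2 \<noteq> zzero"
       "1 \<le> j" "k = j + j" for w1 w2 j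
    using case_even[OF that(1-6)] that(7) by simp
  have P1: "self_similar_index p 3 (L6 p a) (p ^ k)" if a: "a \<in> Zp p" for a
  proof (cases "a = zzero")
    case True then show ?thesis using case_L6zero[OF assms(2)] by simp
  next
    case False
    from k_split[OF assms(2)] show ?thesis
    proof cases
      case (1 j) then show ?thesis unfolding L6_def by (intro EV) (use a False in simp_all)
    next
      case (2 j) then show ?thesis using case_L6odd[OF a False, of j] by (simp add: add.commute)
    qed
  qed
  have P2: "self_similar_index p 3 (L2 p s r c) (p ^ k)" if c: "c \<in> Zp p" "zval p c = 1" for s r c
    using k_split[OF assms(2)]
  proof cases
    case (1 j) then show ?thesis unfolding L2_def by (intro EV) (use c zpow_nz in simp_all)
  next
    case (2 j) then show ?thesis using case_L2odd[OF c, of s r j] by simp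
  qed
  have P3: "self_similar_index p 3 (L7 p s a c) (p ^ k)" if a: "a \<in> Zp p" and c: "c \<in> Zp p" and
    h: "(zval p c = 1 \<and> zval p a \<ge> 1) \<or>
             (zval p (zadd p (zmul p (zof_int p 4) c) (zmul p a a)) = 1 \<and> zval p a = 0 \<and> zval p c = 0)" for s a c
    using k_split[OF assms(2)]
  proof cases
    case (1 j) then show ?thesis unfolding L7_def by (intro EV) (use a c zpow_nz in simp_all)
  next
    case (2 j)
    from h show ?thesis
    proof
      assume "zval p c = 1 \<and> zval p a \<ge> 1"
      then show ?thesis using case_L7i[OF a _ c, of s j] 2 by simp
    next
      assume "zval p (zadd p (zmul p (zof_int p 4) c) (zmul p a a)) = 1 \<and> zval p a = 0 \<and> zval p c = 0"
      then show ?thesis using case_L7ii[OF a _ c, of s j] 2 by simp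
    qed
  qed
  have P4: "self_similar_index p 3 (L7 p s zzero (zof_int p 1)) (p ^ k)" if p3: "p \<ge> 3" for s
    using k_split[OF assms(2)]
  proof cases
    case (1 j) then show ?thesis unfolding L7_def by (intro EV) (use zpow_nz in simp_all)
  next
    case (2 j) then show ?thesis using case_L701[OF p3, of s j] by simp
  qed
  show ?thesis using P1 P2 P3 P4 by blast
qed


end
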